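(* Let $p$ be a prime, $d\geq3$ odd, $\nu\geq0$, $n\geq2$, $q=p^f$ with $f\in\{1,2,\ldots\}\cup\{\infty\}$ (convention $p^\infty=0$, and $f\geq2$ if $p=2$). Let $G=\langle x_1,\ldots,x_d\mid r_0,r_1,\ldots,r_\nu\rangle$ be a minimal pro-$p$ presentation with $r_0=x_1^q[x_1,{}_n\,x_2][x_2,x_3][x_4,x_5]\cdots[x_{d-1},x_d]\cdot s$, $r_1,\ldots,r_\nu\in S'$, $s\in S''$, where $S$ is the closed subgroup generated by $x_3,\ldots,x_d$. Let $\theta\colon G\to1+p\mathbb{Z}_p$ be an orientation such that the cyclotomic pro-$p$ pair $(G,\theta)$ is torsion-free. If $(G,\theta)$ is Kummerian, then $q=0$ and $\theta(x_i)=1$ for $i=2,\ldots,d$.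
   Context: Commutators $[x,y]=x^{-1}y^{-1}xy$, $[y,{}_k x]$ left-normed with $x$ repeated $k$ times; $H'$ closed commutator subgroup, $H''=(H')'$. An orientation is a continuous homomorphism $\theta\colon G\to1+p\mathbb{Z}_p$; $(G,\theta)$ is a cyclotomic pro-$p$ pair, called torsion-free if $p$ is odd or if $p=2$ and $\theta(G)\subseteq1+4\mathbb{Z}_2$. $\mathbb{Z}_p(\theta)$ denotes $\mathbb{Z}_p$ with $G$-action $g.\lambda=\theta(g)\lambda$. The pair is Kummerian if for every $k\geq1$ the map $H^1(G,\mathbb{Z}_p(\theta)/p^k\mathbb{Z}_p(\theta))\to H^1(G,\mathbb{F}_p)$ induced by reduction mod $p$ is surjective. *)

theory Defs
  imports "HOL-Algebra.Algebra" "HOL-Analysis.Product_Topology" "HOL-Analysis.T1_Spaces"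
begin

definition topgroup :: "('a, 'b) monoid_scheme \<Rightarrow> 'a topology \<Rightarrow> bool" where
  "topgroup G T \<longleftrightarrow> group G \<and> topspace T = carrier G \<and>
     continuous_map (prod_topology T T) T (\<lambda>(a, b). a \<otimes>\<^bsub>G\<^esub> b) \<and>
     continuous_map T T (\<lambda>a. inv\<^bsub>G\<^esub> a)"

definition pro_p_group :: "nat \<Rightarrow> ('a, 'b) monoid_scheme \<Rightarrow> 'a topology \<Rightarrow> bool" where
  "pro_p_group p G T \<longleftrightarrow> topgroup G T \<and> compact_space T \<and> Hausdorff_space T \<and>
     (\<forall>U. openin T U \<and> \<one>\<^bsub>G\<^esub> \<in> U \<longrightarrow> (\<exists>N. N \<lhd> G \<and> openin T N \<and> N \<subseteq> U)) \<and>
     (\<forall>N. N \<lhd> G \<and> openin T N \<longrightarrow> (\<exists>e. card (rcosets\<^bsub>G\<^esub> N) = p ^ e))"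

text \<open>Free pro-p group on generators x 1, ..., x d, via the universal property with respect
  to finite p-groups (continuous homomorphisms to discrete finite p-groups; every finite group
  is isomorphic to one with carrier a set of naturals).\<close>
definition free_pro_p :: "nat \<Rightarrow> nat \<Rightarrow> ('a, 'b) monoid_scheme \<Rightarrow> 'a topology \<Rightarrow> (nat \<Rightarrow> 'a) \<Rightarrow> bool" where
  "free_pro_p p d F T x \<longleftrightarrow> pro_p_group p F T \<and> (\<forall>i\<in>{1..d}. x i \<in> carrier F) \<and>
     (\<forall>(H :: nat monoid) y. group H \<and> finite (carrier H) \<and> (\<exists>e. card (carrier H) = p ^ e) \<and>
        (\<forall>i\<in>{1..d}. y i \<in> carrier H) \<longrightarrow>
        (\<exists>!\<phi>. \<phi> \<in> hom F H \<and> \<phi> \<in> extensional (carrier F) \<and>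
              continuous_map T (discrete_topology (carrier H)) \<phi> \<and>
              (\<forall>i\<in>{1..d}. \<phi> (x i) = y i)))"

definition comm :: "('a, 'b) monoid_scheme \<Rightarrow> 'a \<Rightarrow> 'a \<Rightarrow> 'a" where
  "comm G a b = inv\<^bsub>G\<^esub> a \<otimes>\<^bsub>G\<^esub> inv\<^bsub>G\<^esub> b \<otimes>\<^bsub>G\<^esub> a \<otimes>\<^bsub>G\<^esub> b"

fun lcomm :: "('a, 'b) monoid_scheme \<Rightarrow> 'a \<Rightarrow> 'a \<Rightarrow> nat \<Rightarrow> 'a" where
  "lcomm G y x 0 = y"
| "lcomm G y x (Suc k) = comm G (lcomm G y x k) x"

definition gprod :: "('a, 'b) monoid_scheme \<Rightarrow> 'a list \<Rightarrow> 'a" where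
  "gprod G xs = foldr (\<lambda>a b. a \<otimes>\<^bsub>G\<^esub> b) xs \<one>\<^bsub>G\<^esub>"

definition closed_gen :: "('a, 'b) monoid_scheme \<Rightarrow> 'a topology \<Rightarrow> 'a set \<Rightarrow> 'a set" where
  "closed_gen G T A = T closure_of (generate G A)"

definition ccomm :: "('a, 'b) monoid_scheme \<Rightarrow> 'a topology \<Rightarrow> 'a set \<Rightarrow> 'a set" where
  "ccomm G T H = closed_gen G T {comm G a b | a b. a \<in> H \<and> b \<in> H}"

definition closed_normal_gen :: "('a, 'b) monoid_scheme \<Rightarrow> 'a topology \<Rightarrow> 'a set \<Rightarrow> 'a set" where
  "closed_normal_gen G T A =
     closed_gen G T {g \<otimes>\<^bsub>G\<^esub> a \<otimes>\<^bsub>G\<^esub> inv\<^bsub>G\<^esub> g | g a. g \<in> carrier G \<and> a \<in> A}"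

definition frattini :: "nat \<Rightarrow> ('a, 'b) monoid_scheme \<Rightarrow> 'a topology \<Rightarrow> 'a set" where
  "frattini p G T = closed_gen G T
     ({a [^]\<^bsub>G\<^esub> p | a. a \<in> carrier G} \<union> {comm G a b | a b. a \<in> carrier G \<and> b \<in> carrier G})"

text \<open>p-adic integers are represented by the sequence of their residues mod p^k
  (canonical representatives in [0, p^k)).  An orientation theta : G -> 1 + p Z_p is given
  as theta g k = theta(g) mod p^k.\<close>
definition orientation :: "nat \<Rightarrow> ('a, 'b) monoid_scheme \<Rightarrow> 'a topology \<Rightarrow> ('a \<Rightarrow> nat \<Rightarrow> int) \<Rightarrow> bool" where
  "orientation p G T \<theta> \<longleftrightarrow>
     (\<forall>g\<in>carrier G. \<forall>k. 0 \<le> \<theta> g k \<and> \<theta> g k < int p ^ k \<and> \<theta> g (Suc k) mod int p ^ k = \<theta> g k) \<and>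
     (\<forall>g\<in>carrier G. \<theta> g 1 = 1) \<and>
     (\<forall>g\<in>carrier G. \<forall>h\<in>carrier G. \<forall>k. \<theta> (g \<otimes>\<^bsub>G\<^esub> h) k = (\<theta> g k * \<theta> h k) mod int p ^ k) \<and>
     (\<forall>k a. openin T {g \<in> carrier G. \<theta> g k = a})"

definition padic_one :: "nat \<Rightarrow> nat \<Rightarrow> int" where
  "padic_one p k = 1 mod int p ^ k"

definition torsion_free_pair :: "nat \<Rightarrow> ('a, 'b) monoid_scheme \<Rightarrow> ('a \<Rightarrow> nat \<Rightarrow> int) \<Rightarrow> bool" where
  "torsion_free_pair p G \<theta> \<longleftrightarrow> odd p \<or> (p = 2 \<and> (\<forall>g\<in>carrier G. \<theta> g 2 = 1))"

text \<open>Continuous 1-cocycles G -> Z_p(theta)/p^k, values as canonical residues;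
  G acts via g.lambda = theta(g) lambda.\<close>
definition cocycle :: "nat \<Rightarrow> ('a, 'b) monoid_scheme \<Rightarrow> 'a topology \<Rightarrow> ('a \<Rightarrow> nat \<Rightarrow> int) \<Rightarrow> nat \<Rightarrow> ('a \<Rightarrow> int) \<Rightarrow> bool" where
  "cocycle p G T \<theta> k c \<longleftrightarrow>
     (\<forall>g\<in>carrier G. 0 \<le> c g \<and> c g < int p ^ k) \<and>
     (\<forall>g\<in>carrier G. \<forall>h\<in>carrier G. c (g \<otimes>\<^bsub>G\<^esub> h) = (c g + \<theta> g k * c h) mod int p ^ k) \<and>
     (\<forall>a. openin T {g \<in> carrier G. c g = a})"

definition coboundary :: "nat \<Rightarrow> ('a, 'b) monoid_scheme \<Rightarrow> ('a \<Rightarrow> nat \<Rightarrow> int) \<Rightarrow> nat \<Rightarrow> ('a \<Rightarrow> int) \<Rightarrow> bool" where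
  "coboundary p G \<theta> k b \<longleftrightarrow> (\<exists>a. \<forall>g\<in>carrier G. b g = ((\<theta> g k - 1) * a) mod int p ^ k)"

text \<open>Kummerian: for every k >= 1 the reduction map H^1(G, Z_p(theta)/p^k) -> H^1(G, F_p)
  is surjective (F_p = Z_p(theta)/p, with trivial action as theta = 1 mod p): every class
  mod p is the reduction of a class mod p^k, i.e. every cocycle mod p differs from the
  reduction of some cocycle mod p^k by a coboundary mod p.\<close>
definition kummerian :: "nat \<Rightarrow> ('a, 'b) monoid_scheme \<Rightarrow> 'a topology \<Rightarrow> ('a \<Rightarrow> nat \<Rightarrow> int) \<Rightarrow> bool" where
  "kummerian p G T \<theta> \<longleftrightarrow>
     (\<forall>k\<ge>1. \<forall>\<phi>. cocycle p G T \<theta> 1 \<phi> \<longrightarrow>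
        (\<exists>c b. cocycle p G T \<theta> k c \<and> coboundary p G \<theta> 1 b \<and>
               (\<forall>g\<in>carrier G. c g mod int p = (\<phi> g + b g) mod int p)))"

end

theory Submission
  imports Defs
begin


definition gs :: "int \<Rightarrow> nat \<Rightarrow> int" where
  "gs t m = (\<Sum>i<m. t ^ i)"

lemma gs_add: "gs t (m + k) = gs t m + t ^ m * gs t k"
  by (induction k) (simp_all add: gs_def algebra_simps power_add)

lemma gs_mult: "gs t (a * b) = gs t a * gs (t ^ a) b"
proof (induction b)
  case 0 then show ?case by (simp add: gs_def)
next
  case (Suc b)
  have "gs t (a * Suc b) = gs t (a * b) + t ^ (a * b) * gs t a"
    using gs_add[of t "a*b" a] by (simp add: algebra_simps)
  also have "\<dots> = gs t a * (gs (t ^ a) b + (t ^ a) ^ b)"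
    using Suc by (simp add: algebra_simps power_mult)
  also have "\<dots> = gs t a * gs (t ^ a) (Suc b)" by (simp add: gs_def)
  finally show ?case .
qed

lemma sum_lt_double: "2 * (\<Sum>i<m. int i) = int m * (int m - 1)"
  by (induction m) (simp_all add: algebra_simps)

lemma pow_cong1: "(t::int) = 1 + p * w \<Longrightarrow> \<exists>c. t ^ i = 1 + int i * p * w + p^2 * c"
proof (induction i)
  case 0 then show ?case by (intro exI[of _ 0]) simp
next
  case (Suc i)
  then obtain c where c: "t ^ i = 1 + int i * p * w + p^2 * c" by blast
  have "t ^ Suc i = (1 + int i * p * w + p^2 * c) * (1 + p * w)" using c Suc.prems by simp
  also have "\<dots> = 1 + int (Suc i) * p * w + p^2 * (c + int i * w * w + c * p * w)"
    by (simp add: algebra_simps power2_eq_square)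
  finally show ?case by blast
qed

lemma gs_p_odd:
  fixes p :: nat and u :: int
  assumes "odd p" "int p dvd u - 1"
  shows "\<exists>c. gs u p = int p + int p ^ 2 * c"
proof -
  obtain w where w: "u - 1 = int p * w" using assms(2) by (auto elim: dvdE)
  hence u: "u = 1 + int p * w" by simp
  have "\<forall>i. \<exists>c. u ^ i = 1 + int i * int p * w + (int p)^2 * c" using pow_cong1[OF u] by blast
  then obtain cf where cf: "\<And>i. u ^ i = 1 + int i * int p * w + (int p)^2 * cf i" by metis
  obtain h where h: "p = 2 * h + 1" using assms(1) oddE by blast
  have s2: "2 * (\<Sum>i<p. int i) = int p * (int p - 1)" by (rule sum_lt_double)
  hence s: "(\<Sum>i<p. int i) = int p * int h" using h by simp
  have "gs u p = (\<Sum>i<p. 1 + int i * int p * w + (int p)^2 * cf i)" unfolding gs_def using cf by simp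
  also have "\<dots> = int p + (\<Sum>i<p. int i) * int p * w + (int p)^2 * (\<Sum>i<p. cf i)"
    by (simp add: sum.distrib sum_distrib_left sum_distrib_right algebra_simps)
  also have "\<dots> = int p + (int p)^2 * (int h * w + (\<Sum>i<p. cf i))"
    by (simp add: s algebra_simps power2_eq_square)
  finally show ?thesis by blast
qed

lemma gs_p_two:
  assumes "4 dvd u - 1"
  shows "\<exists>c. gs u 2 = int 2 + int 2 ^ 2 * c"
proof -
  obtain w where "u - 1 = 4 * w" using assms by (auto elim: dvdE)
  hence "gs u 2 = 2 + 4 * w" by (simp add: gs_def numeral_2_eq_2)
  thus ?thesis by (intro exI[of _ w]) simp
qed

lemma dvd_pow_sub1: "(m::int) dvd t - 1 \<Longrightarrow> m dvd t ^ k - 1"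
proof (induction k)
  case (Suc k)
  have "t ^ Suc k - 1 = t * (t ^ k - 1) + (t - 1)" by (simp add: algebra_simps)
  then show ?case using Suc by (metis add_diff_eq dvd_add dvd_mult)
qed simp

lemma gs_exact:
  fixes p :: nat and t :: int
  assumes p: "Factorial_Ring.prime p" and h: "(odd p \<and> int p dvd t - 1) \<or> (p = 2 \<and> 4 dvd t - 1)"
  shows "int p ^ f dvd gs t (p ^ f) \<and> \<not> int p ^ (f + 1) dvd gs t (p ^ f)"
proof (induction f)
  case 0 then show ?case using p by (simp add: gs_def) (metis not_prime_1 One_nat_def)
next
  case (Suc f)
  let ?u = "t ^ (p ^ f)"
  have pp: "Factorial_Ring.prime (int p)" using p by simp
  have hu: "(odd p \<and> int p dvd ?u - 1) \<or> (p = 2 \<and> 4 dvd ?u - 1)"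
    using h dvd_pow_sub1 by blast
  have fac: "gs t (p ^ Suc f) = gs t (p ^ f) * gs ?u p"
    using gs_mult[of t "p ^ f" p] by (simp add: mult.commute)
  obtain c where c: "gs ?u p = int p + int p ^ 2 * c"
  proof (cases "p = 2")
    case True
    then show ?thesis using hu gs_p_two that by auto
  next
    case False
    then show ?thesis using hu gs_p_odd that by blast
  qed
  have c2: "gs ?u p = int p * (1 + int p * c)" using c by (simp add: algebra_simps power2_eq_square)
  have nd: "\<not> int p dvd 1 + int p * c"
  proof
    assume "int p dvd 1 + int p * c"
    hence "int p dvd 1" using dvd_add_right_iff[of "int p" "int p * c" 1] by (simp add: add.commute)
    thus False using pp not_prime_unit by blast
  qed
  obtain a where a: "gs t (p ^ f) = int p ^ f * a" using Suc.IH by (auto elim: dvdE)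
  have na: "\<not> int p dvd a" using Suc.IH a by (auto simp: power_Suc2)
  have eq: "gs t (p ^ Suc f) = int p ^ Suc f * (a * (1 + int p * c))"
    using fac a c2 by (simp add: algebra_simps)
  have "\<not> int p dvd a * (1 + int p * c)" using pp na nd prime_dvd_mult_iff by blast
  hence "\<not> int p ^ (Suc f + 1) dvd gs t (p ^ Suc f)"
    using eq pp by (simp add: power_Suc2[of "int p" "Suc f"] prime_gt_0_int)
  then show ?case using eq by simp
qed




locale coc = group F for F (structure) +
  fixes p :: nat and K :: nat and A :: "'a \<Rightarrow> int" and T :: "'a \<Rightarrow> int"
  assumes prime_p: "Factorial_Ring.prime p" and K1: "K \<ge> 1"
  and A_mult: "\<lbrakk>f \<in> carrier F; g \<in> carrier F\<rbrakk> \<Longrightarrow> int p ^ K dvd A (f \<otimes> g) - A f - T f * A g"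
  and T_mult: "\<lbrakk>f \<in> carrier F; g \<in> carrier F\<rbrakk> \<Longrightarrow> int p ^ K dvd T (f \<otimes> g) - T f * T g"
  and T_p: "f \<in> carrier F \<Longrightarrow> int p dvd T f - 1"
begin

lemma pp: "Factorial_Ring.prime (int p)" using prime_p by simp

lemma cop_p: "int p dvd u - 1 \<Longrightarrow> coprime u (int p)"
proof -
  assume a: "int p dvd u - 1"
  have "\<not> int p dvd u"
  proof
    assume "int p dvd u"
    hence "int p dvd u - (u - 1)" using a dvd_diff by blast
    thus False using pp not_prime_unit by simp
  qed
  thus ?thesis using pp prime_imp_coprime coprime_commute by blast
qed

lemma cop_N: "int p dvd u - 1 \<Longrightarrow> coprime u (int p ^ e)"
  using cop_p by simp

lemma cancel_N: "coprime u (int p ^ e) \<Longrightarrow> int p ^ e dvd u * x \<Longrightarrow> int p ^ e dvd x"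
  by (metis coprime_commute coprime_dvd_mult_right_iff)

lemma T_cop: "f \<in> carrier F \<Longrightarrow> coprime (T f) (int p ^ e)"
  using cop_N T_p by blast

lemma T_one: "int p ^ K dvd T \<one> - 1"
proof -
  have "int p ^ K dvd T \<one> - T \<one> * T \<one>" using T_mult[of \<one> \<one>] by simp
  hence "int p ^ K dvd T \<one> * (1 - T \<one>)" by (simp add: algebra_simps)
  hence "int p ^ K dvd 1 - T \<one>" using cancel_N T_cop by blast
  thus ?thesis by (simp add: dvd_diff_commute)
qed

lemma A_one: "int p ^ K dvd A \<one>"
proof -
  have "int p ^ K dvd A \<one> - A \<one> - T \<one> * A \<one>" using A_mult[of \<one> \<one>] by simp
  hence "int p ^ K dvd T \<one> * A \<one>" by simp
  thus ?thesis using cancel_N T_cop by blast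
qed

lemma comm_closed: "g \<in> carrier F \<Longrightarrow> h \<in> carrier F \<Longrightarrow> comm F g h \<in> carrier F"
  by (simp add: comm_def)

lemma lcanc_aux: "x \<in> carrier F \<Longrightarrow> y \<in> carrier F \<Longrightarrow> x \<otimes> (inv x \<otimes> y) = y"
  by (simp add: m_assoc[symmetric])

lemma comm_eq: "g \<in> carrier F \<Longrightarrow> h \<in> carrier F \<Longrightarrow> h \<otimes> g \<otimes> comm F g h = g \<otimes> h"
  by (simp add: comm_def m_assoc lcanc_aux)

lemma comm_T: assumes g: "g \<in> carrier F" and h: "h \<in> carrier F"
  shows "int p ^ K dvd T (comm F g h) - 1"
proof -
  let ?w = "comm F g h"
  have w: "?w \<in> carrier F" using g h comm_closed by blast
  have d1: "int p ^ K dvd T (g \<otimes> h) - T (h \<otimes> g) * T ?w"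
    using T_mult[of "h \<otimes> g" ?w] comm_eq[OF g h] g h w by simp
  have d2: "int p ^ K dvd T (h \<otimes> g) - T h * T g" using T_mult g h by simp
  have d3: "int p ^ K dvd T (g \<otimes> h) - T g * T h" using T_mult g h by simp
  have "T g * T h * (T ?w - 1) = - (T (g \<otimes> h) - T (h \<otimes> g) * T ?w) - T ?w * (T (h \<otimes> g) - T h * T g) + (T (g \<otimes> h) - T g * T h)"
    by (simp add: algebra_simps)
  hence "int p ^ K dvd T g * T h * (T ?w - 1)" using d1 d2 d3
    by (metis dvd_add dvd_diff dvd_minus_iff dvd_mult)
  moreover have "coprime (T g * T h) (int p ^ K)" using T_cop[OF g, of K] T_cop[OF h, of K] by auto
  ultimately show ?thesis using cancel_N by blast
qed

lemma comm_A: assumes g: "g \<in> carrier F" and h: "h \<in> carrier F"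
  shows "int p ^ K dvd T g * T h * A (comm F g h) - (A g * (1 - T h) + A h * (T g - 1))"
proof -
  let ?w = "comm F g h"
  have w: "?w \<in> carrier F" using g h comm_closed by blast
  have d1: "int p ^ K dvd A (g \<otimes> h) - A (h \<otimes> g) - T (h \<otimes> g) * A ?w"
    using A_mult[of "h \<otimes> g" ?w] comm_eq[OF g h] g h w by simp
  have d2: "int p ^ K dvd A (h \<otimes> g) - A h - T h * A g" using A_mult g h by simp
  have d3: "int p ^ K dvd T (h \<otimes> g) - T h * T g" using T_mult g h by simp
  have d4: "int p ^ K dvd A (g \<otimes> h) - A g - T g * A h" using A_mult g h by simp
  have "T g * T h * A ?w - (A g * (1 - T h) + A h * (T g - 1)) =
     - (A (g \<otimes> h) - A (h \<otimes> g) - T (h \<otimes> g) * A ?w) - (A (h \<otimes> g) - A h - T h * A g)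
     - A ?w * (T (h \<otimes> g) - T h * T g) + (A (g \<otimes> h) - A g - T g * A h)"
    by (simp add: algebra_simps)
  then show ?thesis using d1 d2 d3 d4
    by (metis dvd_add dvd_diff dvd_minus_iff dvd_mult)
qed

lemma pow_A: assumes g: "g \<in> carrier F"
  shows "int p ^ K dvd A (g [^] m) - A g * gs (T g) m \<and> int p ^ K dvd T (g [^] m) - T g ^ m"
proof (induction m)
  case 0 then show ?case using A_one T_one by (simp add: gs_def)
next
  case (Suc m)
  have gm: "g [^] m \<in> carrier F" using g by simp
  have e1: "A (g [^] Suc m) - A g * gs (T g) (Suc m) =
     (A (g [^] m \<otimes> g) - A (g [^] m) - T (g [^] m) * A g) + (A (g [^] m) - A g * gs (T g) m)
     + A g * (T (g [^] m) - T g ^ m)"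
    by (simp add: gs_def algebra_simps)
  have e2: "T (g [^] Suc m) - T g ^ Suc m = (T (g [^] m \<otimes> g) - T (g [^] m) * T g) + T g * (T (g [^] m) - T g ^ m)"
    by (simp add: algebra_simps)
  show ?case using e1 e2 Suc A_mult[OF gm g] T_mult[OF gm g]
    by (metis dvd_add dvd_mult)
qed

lemma gprod_A:
  assumes "set ws \<subseteq> carrier F" "\<forall>w\<in>set ws. int p ^ K dvd T w - 1"
  shows "int p ^ K dvd A (gprod F ws) - sum_list (map A ws) \<and> int p ^ K dvd T (gprod F ws) - 1
         \<and> gprod F ws \<in> carrier F"
  using assms
proof (induction ws)
  case Nil then show ?case using A_one T_one by (simp add: gprod_def)
next
  case (Cons w ws)
  let ?P = "gprod F ws"
  have w: "w \<in> carrier F" and P: "?P \<in> carrier F" and tw: "int p ^ K dvd T w - 1"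
    using Cons by auto
  have IH: "int p ^ K dvd A ?P - sum_list (map A ws)" "int p ^ K dvd T ?P - 1" using Cons by auto
  have g: "gprod F (w # ws) = w \<otimes> ?P" by (simp add: gprod_def)
  have e1: "A (w \<otimes> ?P) - sum_list (map A (w # ws)) =
      (A (w \<otimes> ?P) - A w - T w * A ?P) + (T w - 1) * A ?P + (A ?P - sum_list (map A ws))"
    by (simp add: algebra_simps)
  have e2: "T (w \<otimes> ?P) - 1 = (T (w \<otimes> ?P) - T w * T ?P) + T w * (T ?P - 1) + (T w - 1)"
    by (simp add: algebra_simps)
  show ?case unfolding g using e1 e2 IH tw A_mult[OF w P] T_mult[OF w P] w P
    by (metis dvd_add dvd_mult dvd_mult2 m_closed)
qed

end



context coc begin

lemma lcomm_closed: "g \<in> carrier F \<Longrightarrow> h \<in> carrier F \<Longrightarrow> lcomm F g h k \<in> carrier F"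
  by (induction k) (simp_all add: comm_closed)

lemma dvd_N_p: "int p ^ K dvd y \<Longrightarrow> int p dvd y"
proof -
  assume a: "int p ^ K dvd y"
  obtain K' where "K = Suc K'" using K1 by (cases K) auto
  hence "int p ^ K = int p * int p ^ K'" by simp
  thus ?thesis using a dvd_mult_left by metis
qed

lemma dvdD1: "(m::int) dvd x - y \<Longrightarrow> m dvd y \<Longrightarrow> m dvd x"
proof -
  assume a: "m dvd x - y" and b: "m dvd y"
  have "m dvd (x - y) + y" using a b by (rule dvd_add)
  thus ?thesis by simp
qed
lemma dvdD2: "(m::int) dvd x - y \<Longrightarrow> m dvd x \<Longrightarrow> m dvd y"
proof -
  assume a: "m dvd x - y" and b: "m dvd x"
  have "m dvd x - (x - y)" using b a by (rule dvd_diff)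
  thus ?thesis by simp
qed

lemma cancel_N': "int p ^ e dvd u * x \<Longrightarrow> coprime u (int p ^ e) \<Longrightarrow> int p ^ e dvd x"
  using cancel_N by blast

lemma KK: "K = Suc E \<Longrightarrow> int p ^ K = int p * int p ^ E" by simp

lemma pair_good:
  assumes K: "K = Suc E" and g: "g \<in> carrier F" and h: "h \<in> carrier F"
    and ag: "int p dvd A g" and ah: "int p dvd A h" and tg: "int p ^ E dvd T g - 1" and th: "int p ^ E dvd T h - 1"
  shows "int p ^ K dvd A (comm F g h)"
proof -
  have th': "int p ^ E dvd 1 - T h" using th by (simp add: dvd_diff_commute)
  have "int p * int p ^ E dvd A g * (1 - T h)"
    using mult_dvd_mono[OF ag th'] .
  moreover have "int p * int p ^ E dvd A h * (T g - 1)"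
    using mult_dvd_mono[OF ah tg] .
  ultimately have "int p * int p ^ E dvd A g * (1 - T h) + A h * (T g - 1)" by (rule dvd_add)
  moreover have KK: "int p ^ K = int p * int p ^ E" using K by simp
  ultimately have "int p ^ K dvd A g * (1 - T h) + A h * (T g - 1)" by simp
  hence "int p ^ K dvd T g * T h * A (comm F g h)" using comm_A[OF g h] by (rule dvdD1[rotated])
  moreover have "coprime (T g * T h) (int p ^ K)" using T_cop[OF g, of K] T_cop[OF h, of K] by auto
  ultimately show ?thesis by (rule cancel_N')
qed

lemma pair_bad1:
  assumes K: "K = Suc E" and g: "g \<in> carrier F" and h: "h \<in> carrier F"
    and ag: "int p dvd A g" and "coprime (A h) (int p)" and th: "int p ^ E dvd T h - 1" and "\<not> int p ^ K dvd T g - 1"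
  shows "\<not> int p ^ K dvd A (comm F g h)"
proof
  assume a: "int p ^ K dvd A (comm F g h)"
  have th': "int p ^ E dvd 1 - T h" using th by (simp add: dvd_diff_commute)
  have "int p * int p ^ E dvd A g * (1 - T h)"
    using mult_dvd_mono[OF ag th'] .
  hence d1: "int p ^ K dvd A g * (1 - T h)" using KK[OF K] by simp
  have "int p ^ K dvd T g * T h * A (comm F g h)" using a by simp
  hence "int p ^ K dvd A g * (1 - T h) + A h * (T g - 1)" using comm_A[OF g h] by (rule dvdD2[rotated])
  hence "int p ^ K dvd A h * (T g - 1)" using d1 dvdD2[of _ "A g * (1 - T h) + A h * (T g - 1)" "A h * (T g - 1)"] by simp
  moreover have "coprime (A h) (int p ^ K)" using assms(5) by simp
  ultimately have "int p ^ K dvd T g - 1" by (rule cancel_N')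
  thus False using assms(7) by simp
qed

lemma pair_bad2:
  assumes K: "K = Suc E" and g: "g \<in> carrier F" and h: "h \<in> carrier F"
    and ah: "int p dvd A h" and "coprime (A g) (int p)" and tg: "int p ^ E dvd T g - 1" and "\<not> int p ^ K dvd T h - 1"
  shows "\<not> int p ^ K dvd A (comm F g h)"
proof
  assume a: "int p ^ K dvd A (comm F g h)"
  have "int p * int p ^ E dvd A h * (T g - 1)"
    using mult_dvd_mono[OF ah tg] .
  hence d1: "int p ^ K dvd A h * (T g - 1)" using KK[OF K] by simp
  have "int p ^ K dvd T g * T h * A (comm F g h)" using a by simp
  hence "int p ^ K dvd A g * (1 - T h) + A h * (T g - 1)" using comm_A[OF g h] by (rule dvdD2[rotated])
  hence "int p ^ K dvd A g * (1 - T h)" using d1 dvdD2[of _ "A g * (1 - T h) + A h * (T g - 1)" "A g * (1 - T h)"] by simp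
  moreover have "coprime (A g) (int p ^ K)" using assms(5) by simp
  ultimately have "int p ^ K dvd 1 - T h" by (rule cancel_N')
  thus False using assms(7) by (simp add: dvd_diff_commute)
qed

lemma L_lemma:
  assumes K: "K = Suc E" and E: "E \<ge> 1" and g: "g \<in> carrier F" and h: "h \<in> carrier F"
    and th: "int p ^ E dvd T h - 1" and n: "n \<ge> 2"
  shows "int p ^ K dvd A (lcomm F g h n)"
proof -
  obtain E' where "E = Suc E'" using E by (cases E) auto
  hence "int p ^ E = int p * int p ^ E'" by simp
  hence ph: "int p dvd T h - 1" using th dvd_mult_left by metis
  have stepL: "int p ^ K dvd A (lcomm F g h (Suc k))" if k: "k \<ge> 1" and pk: "int p dvd A (lcomm F g h k)" for k
  proof -
    let ?L = "lcomm F g h k"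
    have L: "?L \<in> carrier F" using lcomm_closed g h by blast
    obtain k' where k': "k = Suc k'" using k by (cases k) auto
    have tL: "int p ^ K dvd T ?L - 1" using comm_T k' g h lcomm_closed by simp
    have th': "int p ^ E dvd 1 - T h" using th by (simp add: dvd_diff_commute)
    have "int p * int p ^ E dvd A ?L * (1 - T h)" using mult_dvd_mono[OF pk th'] .
    hence d1: "int p ^ K dvd A ?L * (1 - T h)" using KK[OF K] by simp
    have d2: "int p ^ K dvd A h * (T ?L - 1)" using tL by simp
    have "int p ^ K dvd A ?L * (1 - T h) + A h * (T ?L - 1)" using d1 d2 by (rule dvd_add)
    hence "int p ^ K dvd T ?L * T h * A (comm F ?L h)" using comm_A[OF L h] by (rule dvdD1[rotated])
    moreover have "coprime (T ?L * T h) (int p ^ K)" using T_cop[OF L, of K] T_cop[OF h, of K] by auto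
    ultimately have "int p ^ K dvd A (comm F ?L h)" by (rule cancel_N')
    thus ?thesis by (simp only: lcomm.simps)
  qed
  have p1: "int p dvd A (lcomm F g h (Suc 0))"
  proof -
    have "int p dvd A g * (1 - T h) + A h * (T g - 1)"
      using ph T_p[OF g] by (simp add: dvd_add dvd_diff_commute)
    moreover have "int p dvd T g * T h * A (comm F g h) - (A g * (1 - T h) + A h * (T g - 1))"
      using comm_A[OF g h] dvd_N_p by blast
    ultimately have "int p dvd T g * T h * A (comm F g h)" by (rule dvdD1[rotated])
    moreover have "coprime (T g * T h) (int p ^ 1)" using T_cop[OF g, of 1] T_cop[OF h, of 1] by auto
    ultimately have "int p ^ 1 dvd A (comm F g h)" using cancel_N'[of 1 "T g * T h" "A (comm F g h)"] by simp
    hence "int p dvd A (comm F g h)" by simp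
    moreover have "lcomm F g h (Suc 0) = comm F g h" by simp
    ultimately show ?thesis by simp
  qed
  have "\<forall>k\<ge>1. int p dvd A (lcomm F g h k)"
  proof (intro allI impI)
    fix k :: nat assume "k \<ge> 1"
    then show "int p dvd A (lcomm F g h k)"
    proof (induction k rule: dec_induct)
      case base then show ?case using p1 by (simp add: One_nat_def)
    next
      case (step k) then show ?case using stepL dvd_N_p by blast
    qed
  qed
  moreover obtain k where k: "n = Suc k" "k \<ge> 1" using n by (cases n) auto
  ultimately have "int p dvd A (lcomm F g h k)" by blast
  hence "int p ^ K dvd A (lcomm F g h (Suc k))" by (rule stepL[OF k(2)])
  thus ?thesis using k(1) by (simp only:)
qed

end



context coc begin

lemma master:
  assumes Xq: "Xq \<in> carrier F" and L: "L \<in> carrier F" and C: "C \<in> carrier F" and P: "P \<in> carrier F"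
    and s: "s \<in> carrier F"
    and tL: "int p ^ K dvd T L - 1" and tC: "int p ^ K dvd T C - 1" and as: "int p ^ K dvd A s"
  shows "int p ^ K dvd A (Xq \<otimes> L \<otimes> C \<otimes> P \<otimes> s) - A Xq - T Xq * (A L + A C + A P)"
proof -
  let ?R1 = "Xq \<otimes> L" let ?R2 = "Xq \<otimes> L \<otimes> C" let ?R3 = "Xq \<otimes> L \<otimes> C \<otimes> P"
  have R1: "?R1 \<in> carrier F" and R2: "?R2 \<in> carrier F" and R3: "?R3 \<in> carrier F" using Xq L C P by auto
  have e0: "int p ^ K dvd A (?R3 \<otimes> s) - A ?R3 - T ?R3 * A s" using A_mult[OF R3 s] .
  have e0': "int p ^ K dvd A (?R3 \<otimes> s) - A ?R3"
  proof -
    have "A (?R3 \<otimes> s) - A ?R3 = (A (?R3 \<otimes> s) - A ?R3 - T ?R3 * A s) + T ?R3 * A s" by simp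
    thus ?thesis using e0 as by (metis dvd_add dvd_mult)
  qed
  have e2: "int p ^ K dvd A ?R3 - A ?R2 - T ?R2 * A P" using A_mult[OF R2 P] .
  have e3: "int p ^ K dvd A ?R2 - A ?R1 - T ?R1 * A C" using A_mult[OF R1 C] .
  have e4: "int p ^ K dvd A ?R1 - A Xq - T Xq * A L" using A_mult[OF Xq L] .
  have t1: "int p ^ K dvd T ?R1 - T Xq"
  proof -
    have "T ?R1 - T Xq = (T ?R1 - T Xq * T L) + T Xq * (T L - 1)" by (simp add: algebra_simps)
    thus ?thesis using T_mult[OF Xq L] tL by (metis dvd_add dvd_mult)
  qed
  have t2: "int p ^ K dvd T ?R2 - T Xq"
  proof -
    have "T ?R2 - T Xq = (T ?R2 - T ?R1 * T C) + T ?R1 * (T C - 1) + (T ?R1 - T Xq)" by (simp add: algebra_simps)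
    thus ?thesis using T_mult[OF R1 C] tC t1 by (metis dvd_add dvd_mult)
  qed
  have eq: "A (?R3 \<otimes> s) - A Xq - T Xq * (A L + A C + A P) =
     (A (?R3 \<otimes> s) - A ?R3) + (A ?R3 - A ?R2 - T ?R2 * A P) + (A ?R2 - A ?R1 - T ?R1 * A C)
     + (A ?R1 - A Xq - T Xq * A L) + (T ?R2 - T Xq) * A P + (T ?R1 - T Xq) * A C"
    by (simp add: algebra_simps)
  show ?thesis unfolding eq using e0' e2 e3 e4 t1 t2 by (metis dvd_add dvd_mult2)
qed

lemma sum_list_dvd: "(\<forall>w\<in>set ws. (m::int) dvd w) \<Longrightarrow> m dvd sum_list ws"
  by (induction ws) auto


lemma rel_eq:
  fixes q :: nat
  assumes x: "\<forall>i\<in>{1..d}. x i \<in> carrier F" and d: "odd d" "d \<ge> 3" and n: "n \<ge> 2"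
    and s: "s \<in> carrier F" "int p ^ K dvd A s"
    and r0: "r0 = x 1 [^] q \<otimes> lcomm F (x 1) (x 2) n \<otimes> comm F (x 2) (x 3)
              \<otimes> gprod F (map (\<lambda>j. comm F (x (2 * j)) (x (2 * j + 1))) [2..<(d + 1) div 2]) \<otimes> s"
  shows "int p ^ K dvd A r0 - A (x 1 [^] q) - T (x 1 [^] q) * (A (lcomm F (x 1) (x 2) n)
           + (\<Sum>j\<in>{1..<(d + 1) div 2}. A (comm F (x (2 * j)) (x (2 * j + 1)))))"
proof -
  define u where "u = (d + 1) div 2"
  define f where "f j = comm F (x (2 * j)) (x (2 * j + 1))" for j
  have du: "2 * u = d + 1" using d unfolding u_def by (metis add.commute dvd_mult_div_cancel odd_even_add odd_one)
  have fc: "f j \<in> carrier F" "int p ^ K dvd T (f j) - 1" if "j \<in> {1..<u}" for j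
  proof -
    have "x (2 * j) \<in> carrier F" "x (2 * j + 1) \<in> carrier F" using that x du by auto
    thus "f j \<in> carrier F" "int p ^ K dvd T (f j) - 1" unfolding f_def using comm_closed comm_T by auto
  qed
  have x1: "x 1 \<in> carrier F" and x2: "x 2 \<in> carrier F" and x3: "x 3 \<in> carrier F" using x d by auto
  have u2: "2 \<le> u" using du d by linarith
  let ?ws = "map f [2..<u]"
  have ws: "set ?ws \<subseteq> carrier F" "\<forall>w\<in>set ?ws. int p ^ K dvd T w - 1" using fc by auto
  note gp = gprod_A[OF ws]
  have Xq: "x 1 [^] q \<in> carrier F" using x1 by simp
  let ?L = "lcomm F (x 1) (x 2) n"
  have L: "?L \<in> carrier F" using lcomm_closed x1 x2 by blast
  obtain n' where n': "n = Suc n'" using n by (cases n) auto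
  have tL: "int p ^ K dvd T ?L - 1" unfolding n' using comm_T lcomm_closed x1 x2 by simp
  have C: "comm F (x 2) (x 3) \<in> carrier F" and tC: "int p ^ K dvd T (comm F (x 2) (x 3)) - 1"
    using comm_closed comm_T x2 x3 by auto
  have m: "int p ^ K dvd A r0 - A (x 1 [^] q) - T (x 1 [^] q) * (A ?L + A (comm F (x 2) (x 3)) + A (gprod F ?ws))"
    unfolding r0 f_def[abs_def] u_def[symmetric] using master[OF Xq L C _ s(1) tL tC s(2)] gp by (simp add: f_def[abs_def])
  have sl: "sum_list (map A ?ws) = (\<Sum>j\<in>{2..<u}. A (f j))"
    by (simp add: sum_set_upt_conv_sum_list_nat[symmetric] comp_def)
  have s1: "(\<Sum>j\<in>{1..<u}. A (f j)) = A (comm F (x 2) (x 3)) + (\<Sum>j\<in>{2..<u}. A (f j))"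
  proof -
    have "(\<Sum>j\<in>{1..<u}. A (f j)) = A (f 1) + (\<Sum>j\<in>{Suc 1..<u}. A (f j))"
      using u2 by (intro sum.atLeast_Suc_lessThan) simp
    moreover have "f 1 = comm F (x 2) (x 3)" by (simp add: f_def)
    ultimately show ?thesis by (simp add: numeral_2_eq_2)
  qed
  have dP: "int p ^ K dvd A (gprod F ?ws) - (\<Sum>j\<in>{2..<u}. A (f j))" using gp sl by simp
  let ?Z = "A r0 - A (x 1 [^] q) - T (x 1 [^] q) * (A ?L + (\<Sum>j\<in>{1..<u}. A (f j)))"
  have "?Z = (A r0 - A (x 1 [^] q) - T (x 1 [^] q) * (A ?L + A (comm F (x 2) (x 3)) + A (gprod F ?ws)))
      + T (x 1 [^] q) * (A (gprod F ?ws) - (\<Sum>j\<in>{2..<u}. A (f j)))"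
    unfolding s1 by (simp add: algebra_simps)
  hence "int p ^ K dvd ?Z" using m dP by (metis dvd_add dvd_mult)
  thus ?thesis unfolding u_def f_def .
qed


lemma caseA:
  fixes q :: nat
  assumes K: "K = Suc E" and E: "E \<ge> 1"
    and x: "\<forall>i\<in>{1..d}. x i \<in> carrier F" and d: "odd d" "d \<ge> 3" and n: "n \<ge> 2"
    and s: "s \<in> carrier F" "int p ^ K dvd A s"
    and r0: "r0 = x 1 [^] q \<otimes> lcomm F (x 1) (x 2) n \<otimes> comm F (x 2) (x 3)
              \<otimes> gprod F (map (\<lambda>j. comm F (x (2 * j)) (x (2 * j + 1))) [2..<(d + 1) div 2]) \<otimes> s"
    and ar0: "int p ^ K dvd A r0"
    and tx: "\<forall>i\<in>{2..d}. int p ^ E dvd T (x i) - 1"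
    and q: "q = p ^ E" and a1: "coprime (A (x 1)) (int p)" and ai: "\<forall>i\<in>{2..d}. int p dvd A (x i)"
    and t1: "(odd p \<and> int p dvd T (x 1) - 1) \<or> (p = 2 \<and> 4 dvd T (x 1) - 1)"
  shows False
proof -
  define u where "u = (d + 1) div 2"
  have du: "2 * u = d + 1" using d unfolding u_def by (metis add.commute dvd_mult_div_cancel odd_even_add odd_one)
  note R = rel_eq[OF x d n s r0, unfolded u_def[symmetric]]
  have x1: "x 1 \<in> carrier F" and x2: "x 2 \<in> carrier F" using x d by auto
  have AL: "int p ^ K dvd A (lcomm F (x 1) (x 2) n)"
    using L_lemma[OF K E x1 x2 _ n] tx d by auto
  have AY: "int p ^ K dvd (\<Sum>j\<in>{1..<u}. A (comm F (x (2 * j)) (x (2 * j + 1))))"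
  proof (rule dvd_sum)
    fix j assume j: "j \<in> {1..<u}"
    hence i: "2 * j \<in> {2..d}" "2 * j + 1 \<in> {2..d}" using du by auto
    have g: "x (2 * j) \<in> carrier F" and h: "x (2 * j + 1) \<in> carrier F" using i x by auto
    have ag: "int p dvd A (x (2 * j))" and ah: "int p dvd A (x (2 * j + 1))" using i ai by auto
    have tg: "int p ^ E dvd T (x (2 * j)) - 1" and th: "int p ^ E dvd T (x (2 * j + 1)) - 1" using i tx by auto
    show "int p ^ K dvd A (comm F (x (2 * j)) (x (2 * j + 1)))"
      by (rule pair_good[OF K g h ag ah tg th])
  qed
  have "int p ^ K dvd A (x 1 [^] q)"
  proof -
    let ?Z = "A (lcomm F (x 1) (x 2) n) + (\<Sum>j\<in>{1..<u}. A (comm F (x (2 * j)) (x (2 * j + 1))))"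
    have "int p ^ K dvd ?Z" using AL AY by (rule dvd_add)
    hence "int p ^ K dvd T (x 1 [^] q) * ?Z" by (rule dvd_mult)
    hence c1: "int p ^ K dvd A r0 - T (x 1 [^] q) * ?Z" using ar0 by (rule dvd_diff[rotated])
    have "A (x 1 [^] q) = (A r0 - T (x 1 [^] q) * ?Z) - (A r0 - A (x 1 [^] q) - T (x 1 [^] q) * ?Z)"
      by simp
    thus ?thesis using dvd_diff[OF c1 R] by simp
  qed
  hence "int p ^ K dvd A (x 1) * gs (T (x 1)) q" using conjunct1[OF pow_A[OF x1, of q]] by (rule dvdD2[rotated])
  moreover have "coprime (A (x 1)) (int p ^ K)" using a1 by simp
  ultimately have "int p ^ K dvd gs (T (x 1)) q" by (rule cancel_N')
  thus False using gs_exact[OF prime_p t1, of E] q K by simp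
qed


lemma caseB:
  fixes q :: nat
  assumes K: "K = Suc E" and E: "E \<ge> 1"
    and x: "\<forall>i\<in>{1..d}. x i \<in> carrier F" and d: "odd d" "d \<ge> 3" and n: "n \<ge> 2"
    and s: "s \<in> carrier F" "int p ^ K dvd A s"
    and r0: "r0 = x 1 [^] q \<otimes> lcomm F (x 1) (x 2) n \<otimes> comm F (x 2) (x 3)
              \<otimes> gprod F (map (\<lambda>j. comm F (x (2 * j)) (x (2 * j + 1))) [2..<(d + 1) div 2]) \<otimes> s"
    and ar0: "int p ^ K dvd A r0"
    and tx: "\<forall>i\<in>{2..d}. int p ^ E dvd T (x i) - 1"
    and t1: "(odd p \<and> int p dvd T (x 1) - 1) \<or> (p = 2 \<and> 4 dvd T (x 1) - 1)"
    and j0: "j0 \<in> {2..d}" and a0: "coprime (A (x j0)) (int p)"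
    and ai: "\<forall>i\<in>{1..d}. i \<noteq> j0 \<longrightarrow> int p dvd A (x i)"
    and bad: "\<not> int p ^ K dvd T (x (if even j0 then j0 + 1 else j0 - 1)) - 1"
    and q: "q = 0 \<or> (\<exists>f\<ge>E. q = p ^ f)"
  shows False
proof -
  define u where "u = (d + 1) div 2"
  have du: "2 * u = d + 1" using d unfolding u_def by (metis add.commute dvd_mult_div_cancel odd_even_add odd_one)
  note R = rel_eq[OF x d n s r0, unfolded u_def[symmetric]]
  have x1: "x 1 \<in> carrier F" and x2: "x 2 \<in> carrier F" using x d by auto
  have AL: "int p ^ K dvd A (lcomm F (x 1) (x 2) n)"
    using L_lemma[OF K E x1 x2 _ n] tx d by auto
  have AX: "int p ^ K dvd A (x 1 [^] q)"
  proof (cases "q = 0")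
    case True then show ?thesis using A_one by simp
  next
    case False
    then obtain f where f: "f \<ge> E" "q = p ^ f" using q by blast
    have "int p ^ f dvd gs (T (x 1)) q" using gs_exact[OF prime_p t1, of f] f by simp
    moreover have "int p ^ E dvd int p ^ f" using f by (simp add: le_imp_power_dvd)
    ultimately have g: "int p ^ E dvd gs (T (x 1)) q" by (rule dvd_trans[rotated])
    have a: "int p dvd A (x 1)" using ai j0 d by auto
    have "int p * int p ^ E dvd A (x 1) * gs (T (x 1)) q" using mult_dvd_mono[OF a g] .
    hence "int p ^ K dvd A (x 1) * gs (T (x 1)) q" using KK[OF K] by simp
    thus ?thesis using conjunct1[OF pow_A[OF x1, of q]] by (rule dvdD1[rotated])
  qed
  define jst where "jst = j0 div 2"
  define Y where "Y j = A (comm F (x (2 * j)) (x (2 * j + 1)))" for j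
  have jst: "jst \<in> {1..<u}" using j0 du unfolding jst_def by auto
  have others: "int p ^ K dvd Y j" if j: "j \<in> {1..<u} - {jst}" for j
  proof -
    have i: "2 * j \<in> {2..d}" "2 * j + 1 \<in> {2..d}" using j du by auto
    have ne: "2 * j \<noteq> j0" "2 * j + 1 \<noteq> j0" using j unfolding jst_def by auto
    have g: "x (2 * j) \<in> carrier F" and h: "x (2 * j + 1) \<in> carrier F" using i x by auto
    have ag: "int p dvd A (x (2 * j))" and ah: "int p dvd A (x (2 * j + 1))" using i ai ne by auto
    have tg: "int p ^ E dvd T (x (2 * j)) - 1" and th: "int p ^ E dvd T (x (2 * j + 1)) - 1" using i tx by auto
    show ?thesis unfolding Y_def by (rule pair_good[OF K g h ag ah tg th])
  qed
  have badY: "\<not> int p ^ K dvd Y jst"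
  proof (cases "even j0")
    case True
    hence e: "2 * jst = j0" "2 * jst + 1 = j0 + 1" unfolding jst_def by auto
    have "j0 \<noteq> d" using d True by auto
    hence i: "j0 + 1 \<in> {2..d}" using j0 by auto
    have g: "x j0 \<in> carrier F" and h: "x (j0 + 1) \<in> carrier F" using i j0 x by auto
    have ah: "int p dvd A (x (j0 + 1))" using ai i by auto
    have tg: "int p ^ E dvd T (x j0) - 1" using tx j0 by auto
    have bd: "\<not> int p ^ K dvd T (x (j0 + 1)) - 1" using bad True by simp
    show ?thesis unfolding Y_def e by (rule pair_bad2[OF K g h ah a0 tg bd])
  next
    case False
    hence e: "2 * jst = j0 - 1" "2 * jst + 1 = j0" unfolding jst_def by presburger+
    have "j0 \<noteq> 2" using False by auto
    hence i: "j0 - 1 \<in> {2..d}" using j0 by auto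
    have g: "x (j0 - 1) \<in> carrier F" and h: "x j0 \<in> carrier F" using i j0 x by auto
    have ag: "int p dvd A (x (j0 - 1))" using ai i j0 by auto
    have th: "int p ^ E dvd T (x j0) - 1" using tx j0 by auto
    have bd: "\<not> int p ^ K dvd T (x (j0 - 1)) - 1" using bad False by simp
    have "Y jst = A (comm F (x (j0 - 1)) (x j0))" unfolding Y_def using e by simp
    thus ?thesis using pair_bad1[OF K g h ag a0 th bd] by simp
  qed
  have sumY: "(\<Sum>j\<in>{1..<u}. Y j) = Y jst + (\<Sum>j\<in>{1..<u} - {jst}. Y j)"
    using jst by (simp add: sum.remove)
  have oth: "int p ^ K dvd (\<Sum>j\<in>{1..<u} - {jst}. Y j)" using others by (rule dvd_sum)
  let ?Z = "A (lcomm F (x 1) (x 2) n) + (\<Sum>j\<in>{1..<u}. Y j)"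
  have R': "int p ^ K dvd A r0 - A (x 1 [^] q) - T (x 1 [^] q) * ?Z" using R unfolding Y_def .
  have "int p ^ K dvd A r0 - A (x 1 [^] q)" using ar0 AX by (rule dvd_diff)
  hence "int p ^ K dvd T (x 1 [^] q) * ?Z" using R' by (rule dvdD2[rotated])
  moreover have "coprime (T (x 1 [^] q)) (int p ^ K)" using T_cop x1 by simp
  ultimately have "int p ^ K dvd ?Z" by (rule cancel_N')
  hence "int p ^ K dvd (\<Sum>j\<in>{1..<u}. Y j)" using AL by (metis add_diff_cancel_left' dvd_diff)
  hence "int p ^ K dvd Y jst" unfolding sumY using oth by (metis add_diff_cancel_right' dvd_diff)
  thus False using badY by simp
qed

end



lemma fiber_closed:
  assumes "\<forall>a. openin TX {y \<in> topspace TX. h y = a}"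
  shows "closedin TX {y \<in> topspace TX. h y = b}"
proof -
  have "topspace TX - {y \<in> topspace TX. h y = b} = \<Union> {{y \<in> topspace TX. h y = a} | a. a \<noteq> b}"
    by auto
  moreover have "openin TX (\<Union> {{y \<in> topspace TX. h y = a} | a. a \<noteq> b})"
    using assms by (intro openin_Union) auto
  ultimately show ?thesis unfolding closedin_def by auto
qed

lemma rng0: "0 \<le> (v::int) \<Longrightarrow> v < N \<Longrightarrow> N dvd v \<Longrightarrow> v = 0"
proof -
  assume a: "0 \<le> v" "v < N" "N dvd v"
  have "v mod N = v" using a(1,2) by simp
  moreover have "v mod N = 0" using a(3) by simp
  ultimately show "v = 0" by simp
qed

lemma rng1: "0 \<le> (v::int) \<Longrightarrow> v < N \<Longrightarrow> N dvd v - 1 \<Longrightarrow> N \<ge> 2 \<Longrightarrow> v = 1"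
proof -
  assume a: "0 \<le> v" "v < N" "N dvd v - 1" "N \<ge> 2"
  show "v = 1"
  proof (cases "v = 0")
    case True
    hence "N dvd 1" using a(3) by simp
    hence "N \<le> 1" by (simp add: zdvd_imp_le)
    thus ?thesis using a(4) by simp
  next
    case False
    hence "0 \<le> v - 1" "v - 1 < N" using a by auto
    hence "v - 1 = 0" using a(3) by (rule rng0)
    thus ?thesis by simp
  qed
qed

definition Hp :: "nat \<Rightarrow> nat monoid" where
  "Hp p = \<lparr>carrier = {..<p}, monoid.mult = (\<lambda>a b. (a + b) mod p), one = 0\<rparr>"

lemma Hp_group: "p > 0 \<Longrightarrow> group (Hp p)"
proof (rule groupI)
  assume p: "p > 0"
  show "\<And>x y. x \<in> carrier (Hp p) \<Longrightarrow> y \<in> carrier (Hp p) \<Longrightarrow> x \<otimes>\<^bsub>Hp p\<^esub> y \<in> carrier (Hp p)"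
    using p by (simp add: Hp_def)
  show "\<one>\<^bsub>Hp p\<^esub> \<in> carrier (Hp p)" using p by (simp add: Hp_def)
  show "\<And>x y z. x \<in> carrier (Hp p) \<Longrightarrow> y \<in> carrier (Hp p) \<Longrightarrow> z \<in> carrier (Hp p) \<Longrightarrow>
     x \<otimes>\<^bsub>Hp p\<^esub> y \<otimes>\<^bsub>Hp p\<^esub> z = x \<otimes>\<^bsub>Hp p\<^esub> (y \<otimes>\<^bsub>Hp p\<^esub> z)"
    by (simp add: Hp_def mod_add_left_eq mod_add_right_eq add.assoc)
  show "\<And>x. x \<in> carrier (Hp p) \<Longrightarrow> \<one>\<^bsub>Hp p\<^esub> \<otimes>\<^bsub>Hp p\<^esub> x = x"
    by (simp add: Hp_def)
  show "\<And>x. x \<in> carrier (Hp p) \<Longrightarrow> \<exists>y\<in>carrier (Hp p). y \<otimes>\<^bsub>Hp p\<^esub> x = \<one>\<^bsub>Hp p\<^esub>"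
  proof -
    fix x assume "x \<in> carrier (Hp p)"
    hence x: "x < p" by (simp add: Hp_def)
    show "\<exists>y\<in>carrier (Hp p). y \<otimes>\<^bsub>Hp p\<^esub> x = \<one>\<^bsub>Hp p\<^esub>"
    proof (cases "x = 0")
      case True then show ?thesis using p by (auto simp: Hp_def intro!: bexI[of _ 0])
    next
      case False then show ?thesis using x by (auto simp: Hp_def intro!: bexI[of _ "p - x"])
    qed
  qed
qed

lemma Hp_pow: "y < p \<Longrightarrow> y [^]\<^bsub>Hp p\<^esub> (m::nat) = (m * y) mod p"
proof (induction m)
  case 0 then show ?case by (simp add: Hp_def)
next
  case (Suc m)
  have "y [^]\<^bsub>Hp p\<^esub> Suc m = (y [^]\<^bsub>Hp p\<^esub> m + y) mod p" by (simp add: Hp_def)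
  also have "\<dots> = (m * y mod p + y) mod p" using Suc by simp
  also have "\<dots> = (m * y + y) mod p" by (rule mod_add_left_eq)
  finally show ?case by (simp add: add.commute)
qed




locale setting =
  fixes p d n q \<nu> :: nat
    and F :: "'f monoid" and TF :: "'f topology" and x :: "nat \<Rightarrow> 'f"
    and G :: "'g monoid" and TG :: "'g topology" and \<pi> :: "'f \<Rightarrow> 'g"
    and r :: "nat \<Rightarrow> 'f" and s :: 'f and \<theta> :: "'g \<Rightarrow> nat \<Rightarrow> int"
  assumes prime_p: "Factorial_Ring.prime p"
    and d_odd: "odd d" and d3: "d \<ge> 3"
    and n2: "n \<ge> 2"
    and qform: "q = 0 \<or> (\<exists>f\<ge>1. q = p ^ f)"
    and q2: "p = 2 \<longrightarrow> q \<noteq> 2"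
    and free: "free_pro_p p d F TF x"
    and proG: "pro_p_group p G TG"
    and hom_pi: "\<pi> \<in> hom F G" and cont_pi: "continuous_map TF TG \<pi>" and surj_pi: "\<pi> ` carrier F = carrier G"
    and r_car: "\<forall>i\<in>{0..\<nu>}. r i \<in> carrier F"
    and ker: "kernel F G \<pi> = closed_normal_gen F TF (r ` {0..\<nu>})"
    and r_fr: "r ` {0..\<nu>} \<subseteq> frattini p F TF"
    and s_in: "s \<in> ccomm F TF (ccomm F TF (closed_gen F TF (x ` {3..d})))"
    and r_i: "\<forall>i\<in>{1..\<nu>}. r i \<in> ccomm F TF (closed_gen F TF (x ` {3..d}))"
    and r0: "r 0 = x 1 [^]\<^bsub>F\<^esub> q \<otimes>\<^bsub>F\<^esub> lcomm F (x 1) (x 2) n \<otimes>\<^bsub>F\<^esub> comm F (x 2) (x 3)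
              \<otimes>\<^bsub>F\<^esub> gprod F (map (\<lambda>j. comm F (x (2 * j)) (x (2 * j + 1))) [2..<(d + 1) div 2])
              \<otimes>\<^bsub>F\<^esub> s"
    and orient: "orientation p G TG \<theta>"
    and tf: "torsion_free_pair p G \<theta>"
    and kum: "kummerian p G TG \<theta>"
begin

lemma proF: "pro_p_group p F TF" using free by (simp add: free_pro_p_def)
lemma grpF: "group F" using proF by (simp add: pro_p_group_def topgroup_def)
lemma grpG: "group G" using proG by (simp add: pro_p_group_def topgroup_def)
lemma topF: "topspace TF = carrier F" using proF by (simp add: pro_p_group_def topgroup_def)
lemma topG: "topspace TG = carrier G" using proG by (simp add: pro_p_group_def topgroup_def)
lemma cptF: "compact_space TF" using proF by (simp add: pro_p_group_def)
lemma hausG: "Hausdorff_space TG" using proG by (simp add: pro_p_group_def)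
lemma x_car: "i \<in> {1..d} \<Longrightarrow> x i \<in> carrier F" using free by (simp add: free_pro_p_def)
lemma p_pos: "p > 0" using prime_p not_prime_0 by (cases p) auto
lemma p_gt1: "p > 1"
proof -
  have "p \<noteq> 0" "p \<noteq> 1" using prime_p not_prime_0 not_prime_1 by auto
  thus ?thesis by simp
qed

lemma gh: "group_hom F G \<pi>" using grpF grpG hom_pi by (simp add: group_hom_def group_hom_axioms_def)

lemma pi_car: "f \<in> carrier F \<Longrightarrow> \<pi> f \<in> carrier G" using hom_pi by (simp add: hom_def Pi_def)

lemma theta_props:
  "g \<in> carrier G \<Longrightarrow> 0 \<le> \<theta> g k \<and> \<theta> g k < int p ^ k"
  "g \<in> carrier G \<Longrightarrow> \<theta> g 1 = 1"
  "g \<in> carrier G \<Longrightarrow> h \<in> carrier G \<Longrightarrow> \<theta> (g \<otimes>\<^bsub>G\<^esub> h) k = (\<theta> g k * \<theta> h k) mod int p ^ k"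
  "openin TG {g \<in> carrier G. \<theta> g k = a}"
  using orient by (auto simp: orientation_def)

lemma theta_compat: assumes g: "g \<in> carrier G" and mk: "m \<le> k" shows "\<theta> g k mod int p ^ m = \<theta> g m"
  using mk
proof (induction k rule: dec_induct)
  case base
  then show ?case using theta_props(1)[OF g, of m] by simp
next
  case (step j)
  have a: "\<theta> g (Suc j) mod int p ^ j = \<theta> g j" using orient g by (simp add: orientation_def)
  have "int p ^ m dvd int p ^ j" using step.hyps(1) by (rule le_imp_power_dvd)
  hence "\<theta> g (Suc j) mod int p ^ j mod int p ^ m = \<theta> g (Suc j) mod int p ^ m" by (rule mod_mod_cancel)
  thus ?case using a step.IH by simp
qed


lemma conj_in_closed_normal_gen:
  assumes "a \<in> A" "A \<subseteq> carrier F"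
  shows "a \<in> closed_normal_gen F TF A"
proof -
  interpret F: group F by (rule grpF)
  let ?C = "{g \<otimes>\<^bsub>F\<^esub> a \<otimes>\<^bsub>F\<^esub> inv\<^bsub>F\<^esub> g | g a. g \<in> carrier F \<and> a \<in> A}"
  have C: "?C \<subseteq> carrier F" using assms(2) by auto
  have "a \<in> ?C" using assms by (intro CollectI exI[of _ "\<one>\<^bsub>F\<^esub>"] exI[of _ a]) auto
  hence "a \<in> generate F ?C" by (rule generate.incl)
  moreover have "generate F ?C \<subseteq> topspace TF" using F.generate_incl[OF C] topF by simp
  ultimately show ?thesis unfolding closed_normal_gen_def closed_gen_def using closure_of_subset by blast
qed

lemma closed_gen_sub:
  assumes "subgroup Z F" "closedin TF Z" "A \<subseteq> Z"
  shows "closed_gen F TF A \<subseteq> Z"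
proof -
  interpret F: group F by (rule grpF)
  have "generate F A \<subseteq> Z" using F.generate_subgroup_incl assms by blast
  thus ?thesis unfolding closed_gen_def using closure_of_minimal assms(2) by blast
qed

lemma phi_exists:
  assumes j: "j \<in> {1..d}"
  shows "\<exists>\<phi>. cocycle p G TG \<theta> 1 \<phi> \<and> (\<forall>i\<in>{1..d}. \<phi> (\<pi> (x i)) = (if i = j then 1 else 0))"
proof -
  interpret F: group F by (rule grpF)
  interpret G: group G by (rule grpG)
  define y where "y i = (if i = j then 1 else 0::nat)" for i
  have HG: "group (Hp p)" using Hp_group p_pos by blast
  have cH: "carrier (Hp p) = {..<p}" by (simp add: Hp_def)
  have "\<exists>!\<phi>. \<phi> \<in> hom F (Hp p) \<and> \<phi> \<in> extensional (carrier F) \<and>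
              continuous_map TF (discrete_topology (carrier (Hp p))) \<phi> \<and> (\<forall>i\<in>{1..d}. \<phi> (x i) = y i)"
  proof -
    have "\<forall>(H :: nat monoid) y. group H \<and> finite (carrier H) \<and> (\<exists>e. card (carrier H) = p ^ e) \<and>
        (\<forall>i\<in>{1..d}. y i \<in> carrier H) \<longrightarrow>
        (\<exists>!\<phi>. \<phi> \<in> hom F H \<and> \<phi> \<in> extensional (carrier F) \<and>
              continuous_map TF (discrete_topology (carrier H)) \<phi> \<and>
              (\<forall>i\<in>{1..d}. \<phi> (x i) = y i))" using free unfolding free_pro_p_def by blast
    moreover have "group (Hp p) \<and> finite (carrier (Hp p)) \<and> (\<exists>e. card (carrier (Hp p)) = p ^ e) \<and>
        (\<forall>i\<in>{1..d}. y i \<in> carrier (Hp p))"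
      using HG p_gt1 by (auto simp: cH y_def intro!: exI[of _ 1])
    ultimately show ?thesis by blast
  qed
  then obtain \<phi>0 where hom0: "\<phi>0 \<in> hom F (Hp p)"
    and cont0: "continuous_map TF (discrete_topology {..<p}) \<phi>0" and val0: "\<forall>i\<in>{1..d}. \<phi>0 (x i) = y i"
    using cH by metis
  interpret h0: group_hom F "Hp p" \<phi>0 using grpF HG hom0 by (simp add: group_hom_def group_hom_axioms_def)
  have rng: "f \<in> carrier F \<Longrightarrow> \<phi>0 f < p" for f using h0.hom_closed cH by auto
  have mul: "a \<in> carrier F \<Longrightarrow> b \<in> carrier F \<Longrightarrow> \<phi>0 (a \<otimes>\<^bsub>F\<^esub> b) = (\<phi>0 a + \<phi>0 b) mod p" for a b
    using h0.hom_mult by (simp add: Hp_def)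
  have one0: "\<phi>0 \<one>\<^bsub>F\<^esub> = 0" using h0.hom_one by (simp add: Hp_def)
  have inv0: "a \<in> carrier F \<Longrightarrow> (\<phi>0 (inv\<^bsub>F\<^esub> a) + \<phi>0 a) mod p = 0" for a
    using mul[of "inv\<^bsub>F\<^esub> a" a] one0 by simp
  have inv0': "a \<in> carrier F \<Longrightarrow> (\<phi>0 a + \<phi>0 (inv\<^bsub>F\<^esub> a)) mod p = 0" for a
    using mul[of a "inv\<^bsub>F\<^esub> a"] one0 by simp
  define K0 where "K0 = {f \<in> carrier F. \<phi>0 f = 0}"
  have sgK0: "subgroup K0 F"
  proof -
    have "K0 = kernel F (Hp p) \<phi>0" by (simp add: K0_def kernel_def Hp_def)
    thus ?thesis using h0.subgroup_kernel by simp
  qed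
  have clK0: "closedin TF K0"
  proof -
    have "closedin TF {f \<in> topspace TF. \<phi>0 f \<in> {0}}"
      using closedin_continuous_map_preimage[OF cont0, of "{0}"] p_pos by simp
    moreover have "{f \<in> topspace TF. \<phi>0 f \<in> {0}} = K0" by (auto simp: K0_def topF)
    ultimately show ?thesis by simp
  qed
  have frK0: "frattini p F TF \<subseteq> K0"
    unfolding frattini_def
  proof (rule closed_gen_sub[OF sgK0 clK0])
    show "{a [^]\<^bsub>F\<^esub> p |a. a \<in> carrier F} \<union> {comm F a b |a b. a \<in> carrier F \<and> b \<in> carrier F} \<subseteq> K0"
    proof
      fix z assume "z \<in> {a [^]\<^bsub>F\<^esub> p |a. a \<in> carrier F} \<union> {comm F a b |a b. a \<in> carrier F \<and> b \<in> carrier F}"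
      then consider (pw) a where "a \<in> carrier F" "z = a [^]\<^bsub>F\<^esub> p"
        | (cm) a b where "a \<in> carrier F" "b \<in> carrier F" "z = comm F a b" by blast
      then show "z \<in> K0"
      proof cases
        case pw
        have "\<phi>0 z = \<phi>0 a [^]\<^bsub>Hp p\<^esub> p" using pw h0.hom_nat_pow by simp
        also have "\<dots> = 0" using Hp_pow[OF rng[OF pw(1)]] by simp
        finally show ?thesis using pw by (simp add: K0_def)
      next
        case cm
        let ?ia = "\<phi>0 (inv\<^bsub>F\<^esub> a)" and ?ib = "\<phi>0 (inv\<^bsub>F\<^esub> b)"
        have "\<phi>0 z = (((?ia + ?ib) mod p + \<phi>0 a) mod p + \<phi>0 b) mod p"
          using cm by (simp add: comm_def mul del: h0.hom_inv h0.hom_mult)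
        also have "\<dots> = ((?ia + \<phi>0 a) + (?ib + \<phi>0 b)) mod p"
          by (simp add: mod_simps ac_simps)
        also have "\<dots> = ((?ia + \<phi>0 a) mod p + (?ib + \<phi>0 b) mod p) mod p"
          by (simp add: mod_add_eq)
        also have "\<dots> = 0" using inv0 cm by simp
        finally show ?thesis using cm by (simp add: K0_def comm_def)
      qed
    qed
  qed
  have rK0: "r ` {0..\<nu>} \<subseteq> K0" using r_fr frK0 by blast
  have kerK0: "kernel F G \<pi> \<subseteq> K0"
    unfolding ker closed_normal_gen_def
  proof (rule closed_gen_sub[OF sgK0 clK0])
    show "{g \<otimes>\<^bsub>F\<^esub> a \<otimes>\<^bsub>F\<^esub> inv\<^bsub>F\<^esub> g |g a. g \<in> carrier F \<and> a \<in> r ` {0..\<nu>}} \<subseteq> K0"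
    proof
      fix z assume "z \<in> {g \<otimes>\<^bsub>F\<^esub> a \<otimes>\<^bsub>F\<^esub> inv\<^bsub>F\<^esub> g |g a. g \<in> carrier F \<and> a \<in> r ` {0..\<nu>}}"
      then obtain g a where ga: "g \<in> carrier F" "a \<in> r ` {0..\<nu>}" "z = g \<otimes>\<^bsub>F\<^esub> a \<otimes>\<^bsub>F\<^esub> inv\<^bsub>F\<^esub> g" by blast
      have a: "a \<in> carrier F" "\<phi>0 a = 0" using ga(2) rK0 by (auto simp: K0_def)
      have "\<phi>0 z = ((\<phi>0 g + \<phi>0 a) mod p + \<phi>0 (inv\<^bsub>F\<^esub> g)) mod p" using ga a by (simp add: mul del: h0.hom_inv h0.hom_mult)
      also have "\<dots> = 0" using a rng[OF ga(1)] inv0'[OF ga(1)] by simp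
      finally show "z \<in> K0" using ga a by (simp add: K0_def)
    qed
  qed
  define \<phi> where "\<phi> g = int (\<phi>0 (inv_into (carrier F) \<pi> g))" for g
  have key: "\<phi> (\<pi> f) = int (\<phi>0 f)" if f: "f \<in> carrier F" for f
  proof -
    let ?f' = "inv_into (carrier F) \<pi> (\<pi> f)"
    have f': "?f' \<in> carrier F" "\<pi> ?f' = \<pi> f" using f by (auto intro: inv_into_into f_inv_into_f)
    have "\<pi> (?f' \<otimes>\<^bsub>F\<^esub> inv\<^bsub>F\<^esub> f) = \<one>\<^bsub>G\<^esub>"
      using f f' gh by (simp add: group_hom.hom_mult group_hom.hom_inv pi_car)
    hence "?f' \<otimes>\<^bsub>F\<^esub> inv\<^bsub>F\<^esub> f \<in> K0" using kerK0 f f' by (auto simp: kernel_def)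
    hence z: "\<phi>0 (?f' \<otimes>\<^bsub>F\<^esub> inv\<^bsub>F\<^esub> f) = 0" by (simp add: K0_def)
    have "?f' = (?f' \<otimes>\<^bsub>F\<^esub> inv\<^bsub>F\<^esub> f) \<otimes>\<^bsub>F\<^esub> f" using f f' by (simp add: F.m_assoc)
    hence "\<phi>0 ?f' = (0 + \<phi>0 f) mod p" using mul f f' z by (metis F.m_closed F.inv_closed)
    thus ?thesis using rng[OF f] by (simp add: \<phi>_def)
  qed
  have surj: "g \<in> carrier G \<Longrightarrow> \<exists>f\<in>carrier F. g = \<pi> f" for g using surj_pi by auto
  have coc: "cocycle p G TG \<theta> 1 \<phi>"
    unfolding cocycle_def
  proof (intro conjI ballI allI)
    fix g assume "g \<in> carrier G"
    then obtain f where f: "f \<in> carrier F" "g = \<pi> f" using surj by blast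
    show "0 \<le> \<phi> g" by (simp add: \<phi>_def)
    show "\<phi> g < int p ^ 1" using key[OF f(1)] rng[OF f(1)] f(2) by simp
  next
    fix g h assume g: "g \<in> carrier G" and h: "h \<in> carrier G"
    obtain f where f: "f \<in> carrier F" "g = \<pi> f" using surj g by blast
    obtain f' where f': "f' \<in> carrier F" "h = \<pi> f'" using surj h by blast
    have "g \<otimes>\<^bsub>G\<^esub> h = \<pi> (f \<otimes>\<^bsub>F\<^esub> f')" using f f' gh by (simp add: group_hom.hom_mult)
    hence "\<phi> (g \<otimes>\<^bsub>G\<^esub> h) = int ((\<phi>0 f + \<phi>0 f') mod p)" using key f f' mul by simp
    also have "\<dots> = (\<phi> g + \<theta> g 1 * \<phi> h) mod int p ^ 1"
      using key f f' theta_props(2)[OF g] by (simp add: zmod_int)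
    finally show "\<phi> (g \<otimes>\<^bsub>G\<^esub> h) = (\<phi> g + \<theta> g 1 * \<phi> h) mod int p ^ 1" .
  next
    fix a
    define U where "U = {f \<in> carrier F. int (\<phi>0 f) \<noteq> a}"
    have "closedin TF {f \<in> topspace TF. \<phi>0 f \<in> {v \<in> {..<p}. int v \<noteq> a}}"
      by (rule closedin_continuous_map_preimage[OF cont0]) auto
    moreover have "{f \<in> topspace TF. \<phi>0 f \<in> {v \<in> {..<p}. int v \<noteq> a}} = U"
      using rng by (auto simp: U_def topF)
    ultimately have "closedin TF U" by simp
    hence "compactin TF U" using cptF closedin_compact_space by blast
    hence "compactin TG (\<pi> ` U)" using image_compactin cont_pi by blast
    hence cl: "closedin TG (\<pi> ` U)" using compactin_imp_closedin hausG by blast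
    have "{g \<in> carrier G. \<phi> g = a} = topspace TG - \<pi> ` U"
    proof (intro equalityI subsetI)
      fix g assume "g \<in> {g \<in> carrier G. \<phi> g = a}"
      then have g: "g \<in> carrier G" "\<phi> g = a" by auto
      have "g \<notin> \<pi> ` U"
      proof
        assume "g \<in> \<pi> ` U"
        then obtain f where "f \<in> U" "g = \<pi> f" by blast
        thus False using key g by (auto simp: U_def)
      qed
      thus "g \<in> topspace TG - \<pi> ` U" using g topG by simp
    next
      fix g assume "g \<in> topspace TG - \<pi> ` U"
      hence g: "g \<in> carrier G" "g \<notin> \<pi> ` U" using topG by auto
      obtain f where f: "f \<in> carrier F" "g = \<pi> f" using surj g(1) by blast
      have "f \<notin> U" using f g by blast
      hence "int (\<phi>0 f) = a" using f by (simp add: U_def)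
      thus "g \<in> {g \<in> carrier G. \<phi> g = a}" using key f g by simp
    qed
    thus "openin TG {g \<in> carrier G. \<phi> g = a}" using cl by (simp add: closedin_def)
  qed
  have "\<forall>i\<in>{1..d}. \<phi> (\<pi> (x i)) = (if i = j then 1 else 0)"
    using key x_car val0 by (simp add: y_def)
  thus ?thesis using coc by blast
qed

end



lemma mod_dvd_diff: "(N::int) dvd v mod N - v"
proof -
  have "v - v mod N = N * (v div N)" by (rule minus_mod_eq_mult_div)
  hence "N dvd v - v mod N" by simp
  thus ?thesis by (simp add: dvd_diff_commute)
qed

context setting begin

lemma N2: "K \<ge> 1 \<Longrightarrow> int p ^ K \<ge> 2"
proof -
  assume K: "K \<ge> 1"
  have a: "2 \<le> p ^ K" using power_increasing[of 1 K p] K p_gt1 by simp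
  hence "int 2 \<le> int (p ^ K)" by (simp only: of_nat_le_iff)
  thus ?thesis by simp
qed

lemma coc_interp:
  assumes K: "K \<ge> 1" and c: "cocycle p G TG \<theta> K c"
  shows "coc F p K (\<lambda>f. c (\<pi> f)) (\<lambda>f. \<theta> (\<pi> f) K)"
proof -
  have A: "int p ^ K dvd c (\<pi> (f \<otimes>\<^bsub>F\<^esub> g)) - c (\<pi> f) - \<theta> (\<pi> f) K * c (\<pi> g)"
    and T: "int p ^ K dvd \<theta> (\<pi> (f \<otimes>\<^bsub>F\<^esub> g)) K - \<theta> (\<pi> f) K * \<theta> (\<pi> g) K"
    if f: "f \<in> carrier F" and g: "g \<in> carrier F" for f g
  proof -
    have e: "\<pi> (f \<otimes>\<^bsub>F\<^esub> g) = \<pi> f \<otimes>\<^bsub>G\<^esub> \<pi> g" using gh f g by (simp add: group_hom.hom_mult)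
    have "c (\<pi> f \<otimes>\<^bsub>G\<^esub> \<pi> g) = (c (\<pi> f) + \<theta> (\<pi> f) K * c (\<pi> g)) mod int p ^ K"
      using c pi_car f g by (simp add: cocycle_def)
    thus "int p ^ K dvd c (\<pi> (f \<otimes>\<^bsub>F\<^esub> g)) - c (\<pi> f) - \<theta> (\<pi> f) K * c (\<pi> g)"
      using e mod_dvd_diff by (metis diff_diff_eq)
    have "\<theta> (\<pi> f \<otimes>\<^bsub>G\<^esub> \<pi> g) K = (\<theta> (\<pi> f) K * \<theta> (\<pi> g) K) mod int p ^ K"
      using theta_props(3) pi_car f g by simp
    thus "int p ^ K dvd \<theta> (\<pi> (f \<otimes>\<^bsub>F\<^esub> g)) K - \<theta> (\<pi> f) K * \<theta> (\<pi> g) K"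
      using e mod_dvd_diff by metis
  qed
  have Tp: "int p dvd \<theta> (\<pi> f) K - 1" if f: "f \<in> carrier F" for f
  proof -
    have "\<theta> (\<pi> f) K mod int p ^ 1 = \<theta> (\<pi> f) 1" using theta_compat pi_car f K by blast
    hence "\<theta> (\<pi> f) K mod int p = 1 mod int p" using theta_props(2) pi_car f p_gt1 by simp
    thus "int p dvd \<theta> (\<pi> f) K - 1" by (simp add: mod_eq_dvd_iff)
  qed
  show ?thesis unfolding coc_def coc_axioms_def using grpF prime_p K A T Tp by blast
qed

lemma lift:
  assumes j: "j \<in> {1..d}" and K: "K \<ge> 1"
  shows "\<exists>c. cocycle p G TG \<theta> K c \<and> (\<forall>i\<in>{1..d}. c (\<pi> (x i)) mod int p = (if i = j then 1 else 0))"
proof -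
  obtain \<phi> where \<phi>: "cocycle p G TG \<theta> 1 \<phi>" "\<forall>i\<in>{1..d}. \<phi> (\<pi> (x i)) = (if i = j then 1 else 0)"
    using phi_exists[OF j] by blast
  obtain c b where cb: "cocycle p G TG \<theta> K c" "coboundary p G \<theta> 1 b"
      "\<forall>g\<in>carrier G. c g mod int p = (\<phi> g + b g) mod int p"
    using kum K \<phi>(1) unfolding kummerian_def by blast
  have b0: "g \<in> carrier G \<Longrightarrow> b g = 0" for g
    using cb(2) theta_props(2) by (auto simp: coboundary_def)
  have "\<forall>i\<in>{1..d}. c (\<pi> (x i)) mod int p = (if i = j then 1 else 0)"
  proof
    fix i assume i: "i \<in> {1..d}"
    have "c (\<pi> (x i)) mod int p = \<phi> (\<pi> (x i)) mod int p" using cb(3) b0 pi_car x_car i by simp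
    thus "c (\<pi> (x i)) mod int p = (if i = j then 1 else 0)" using \<phi>(2) i p_gt1 by simp
  qed
  thus ?thesis using cb(1) by blast
qed


lemma s_zero:
  assumes K: "K \<ge> 1" and c: "cocycle p G TG \<theta> K c"
  shows "s \<in> carrier F \<and> c (\<pi> s) = 0"
proof -
  interpret F: group F by (rule grpF)
  interpret C: coc F p K "\<lambda>f. c (\<pi> f)" "\<lambda>f. \<theta> (\<pi> f) K" by (rule coc_interp[OF K c])
  have N: "int p ^ K \<ge> 2" using N2 K by simp
  have thr: "f \<in> carrier F \<Longrightarrow> 0 \<le> \<theta> (\<pi> f) K \<and> \<theta> (\<pi> f) K < int p ^ K" for f
    using theta_props(1) pi_car by blast
  have cr: "f \<in> carrier F \<Longrightarrow> 0 \<le> c (\<pi> f) \<and> c (\<pi> f) < int p ^ K" for f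
    using c pi_car by (simp add: cocycle_def)
  have T1: "f \<in> carrier F \<Longrightarrow> int p ^ K dvd \<theta> (\<pi> f) K - 1 \<Longrightarrow> \<theta> (\<pi> f) K = 1" for f
    using rng1 thr N by blast
  have A0: "f \<in> carrier F \<Longrightarrow> int p ^ K dvd c (\<pi> f) \<Longrightarrow> c (\<pi> f) = 0" for f
    using rng0 cr by blast
  define Ks where "Ks = {f \<in> carrier F. \<theta> (\<pi> f) K = 1}"
  have clK: "closedin TF Ks"
  proof -
    have "closedin TG {g \<in> topspace TG. \<theta> g K = 1}"
      by (rule fiber_closed) (simp add: topG theta_props(4))
    hence "closedin TF {f \<in> topspace TF. \<pi> f \<in> {g \<in> topspace TG. \<theta> g K = 1}}"
      by (rule closedin_continuous_map_preimage[OF cont_pi])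
    moreover have "{f \<in> topspace TF. \<pi> f \<in> {g \<in> topspace TG. \<theta> g K = 1}} = Ks"
      using pi_car by (auto simp: Ks_def topF topG)
    ultimately show ?thesis by simp
  qed
  have one1: "\<theta> (\<pi> \<one>\<^bsub>F\<^esub>) K = 1" using T1 C.T_one by simp
  have sgK: "subgroup Ks F"
  proof (rule F.subgroupI)
    show "Ks \<subseteq> carrier F" by (auto simp: Ks_def)
    show "Ks \<noteq> {}" using one1 by (auto simp: Ks_def)
  next
    fix a assume a: "a \<in> Ks"
    hence a': "a \<in> carrier F" "\<theta> (\<pi> a) K = 1" by (auto simp: Ks_def)
    have "int p ^ K dvd \<theta> (\<pi> (inv\<^bsub>F\<^esub> a \<otimes>\<^bsub>F\<^esub> a)) K - \<theta> (\<pi> (inv\<^bsub>F\<^esub> a)) K * \<theta> (\<pi> a) K"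
      using C.T_mult[of "inv\<^bsub>F\<^esub> a" a] a' by simp
    hence "int p ^ K dvd \<theta> (\<pi> \<one>\<^bsub>F\<^esub>) K - \<theta> (\<pi> (inv\<^bsub>F\<^esub> a)) K" using a' by simp
    hence "int p ^ K dvd 1 - \<theta> (\<pi> (inv\<^bsub>F\<^esub> a)) K" using one1 by simp
    hence "int p ^ K dvd \<theta> (\<pi> (inv\<^bsub>F\<^esub> a)) K - 1" by (simp add: dvd_diff_commute)
    thus "inv\<^bsub>F\<^esub> a \<in> Ks" using T1 a' by (simp add: Ks_def)
  next
    fix a b assume "a \<in> Ks" "b \<in> Ks"
    hence ab: "a \<in> carrier F" "b \<in> carrier F" "\<theta> (\<pi> a) K = 1" "\<theta> (\<pi> b) K = 1" by (auto simp: Ks_def)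
    have "int p ^ K dvd \<theta> (\<pi> (a \<otimes>\<^bsub>F\<^esub> b)) K - 1" using C.T_mult[OF ab(1,2)] ab(3,4) by simp
    thus "a \<otimes>\<^bsub>F\<^esub> b \<in> Ks" using T1 ab by (simp add: Ks_def)
  qed
  define Z where "Z = {f \<in> Ks. c (\<pi> f) = 0}"
  have clZ: "closedin TF Z"
  proof -
    have "closedin TG {g \<in> topspace TG. c g = 0}"
      by (rule fiber_closed) (use c in \<open>simp add: topG cocycle_def\<close>)
    hence "closedin TF {f \<in> topspace TF. \<pi> f \<in> {g \<in> topspace TG. c g = 0}}"
      by (rule closedin_continuous_map_preimage[OF cont_pi])
    hence "closedin TF (Ks \<inter> {f \<in> topspace TF. \<pi> f \<in> {g \<in> topspace TG. c g = 0}})" using clK by blast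
    moreover have "Ks \<inter> {f \<in> topspace TF. \<pi> f \<in> {g \<in> topspace TG. c g = 0}} = Z"
      using pi_car by (auto simp: Ks_def Z_def topF topG)
    ultimately show ?thesis by simp
  qed
  have cone: "c (\<pi> \<one>\<^bsub>F\<^esub>) = 0" using A0 C.A_one by simp
  have sgZ: "subgroup Z F"
  proof (rule F.subgroupI)
    show "Z \<subseteq> carrier F" by (auto simp: Z_def Ks_def)
    show "Z \<noteq> {}" using one1 cone by (auto simp: Z_def Ks_def)
  next
    fix a assume a: "a \<in> Z"
    hence a': "a \<in> Ks" "a \<in> carrier F" "c (\<pi> a) = 0" by (auto simp: Z_def Ks_def)
    have ia: "inv\<^bsub>F\<^esub> a \<in> Ks" by (rule subgroup.m_inv_closed[OF sgK a'(1)])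
    have "int p ^ K dvd c (\<pi> (inv\<^bsub>F\<^esub> a \<otimes>\<^bsub>F\<^esub> a)) - c (\<pi> (inv\<^bsub>F\<^esub> a)) - \<theta> (\<pi> (inv\<^bsub>F\<^esub> a)) K * c (\<pi> a)"
      using C.A_mult[of "inv\<^bsub>F\<^esub> a" a] a' by simp
    hence "int p ^ K dvd c (\<pi> \<one>\<^bsub>F\<^esub>) - c (\<pi> (inv\<^bsub>F\<^esub> a))" using a' by simp
    hence "int p ^ K dvd c (\<pi> (inv\<^bsub>F\<^esub> a))" using cone by simp
    thus "inv\<^bsub>F\<^esub> a \<in> Z" using A0 ia a' by (simp add: Z_def)
  next
    fix a b assume "a \<in> Z" "b \<in> Z"
    hence ab: "a \<in> Ks" "b \<in> Ks" "a \<in> carrier F" "b \<in> carrier F" "c (\<pi> a) = 0" "c (\<pi> b) = 0"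
      by (auto simp: Z_def Ks_def)
    have m: "a \<otimes>\<^bsub>F\<^esub> b \<in> Ks" by (rule subgroup.m_closed[OF sgK ab(1) ab(2)])
    have "int p ^ K dvd c (\<pi> (a \<otimes>\<^bsub>F\<^esub> b))" using C.A_mult[OF ab(3,4)] ab(5,6) by simp
    thus "a \<otimes>\<^bsub>F\<^esub> b \<in> Z" using A0 m ab by (simp add: Z_def)
  qed
  define Y where "Y = closed_gen F TF (x ` {3..d})"
  have "TF closure_of (generate F (x ` {3..d})) \<subseteq> topspace TF" by (rule closure_of_subset_topspace)
  hence Y: "Y \<subseteq> carrier F" unfolding Y_def closed_gen_def using topF by simp
  have c1: "ccomm F TF Y \<subseteq> Ks"
    unfolding ccomm_def
  proof (rule closed_gen_sub[OF sgK clK])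
    show "{comm F a b |a b. a \<in> Y \<and> b \<in> Y} \<subseteq> Ks"
    proof
      fix z assume "z \<in> {comm F a b |a b. a \<in> Y \<and> b \<in> Y}"
      then obtain a b where ab0: "a \<in> Y" "b \<in> Y" "z = comm F a b" by blast
      hence ab: "a \<in> carrier F" "b \<in> carrier F" "z = comm F a b" using Y by auto
      show "z \<in> Ks" using C.comm_T[OF ab(1,2)] T1 C.comm_closed[OF ab(1,2)] ab(3) by (simp add: Ks_def)
    qed
  qed
  have c2: "ccomm F TF (ccomm F TF Y) \<subseteq> Z"
    unfolding ccomm_def[of F TF "ccomm F TF Y"]
  proof (rule closed_gen_sub[OF sgZ clZ])
    show "{comm F a b |a b. a \<in> ccomm F TF Y \<and> b \<in> ccomm F TF Y} \<subseteq> Z"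
    proof
      fix z assume "z \<in> {comm F a b |a b. a \<in> ccomm F TF Y \<and> b \<in> ccomm F TF Y}"
      then obtain a b where ab0: "a \<in> ccomm F TF Y" "b \<in> ccomm F TF Y" "z = comm F a b" by blast
      hence ab: "a \<in> Ks" "b \<in> Ks" "z = comm F a b" using c1 by auto
      have ab': "a \<in> carrier F" "b \<in> carrier F" "\<theta> (\<pi> a) K = 1" "\<theta> (\<pi> b) K = 1" using ab by (auto simp: Ks_def)
      have w: "comm F a b \<in> carrier F" by (rule C.comm_closed[OF ab'(1,2)])
      have "int p ^ K dvd c (\<pi> (comm F a b))" using C.comm_A[OF ab'(1,2)] ab'(3,4) by simp
      hence "c (\<pi> (comm F a b)) = 0" using A0[OF w] by blast
      moreover have "comm F a b \<in> Ks" using C.comm_T[OF ab'(1,2)] T1 w by (simp add: Ks_def)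
      ultimately show "z \<in> Z" using ab(3) by (simp add: Z_def)
    qed
  qed
  have "s \<in> Z" using s_in c2 unfolding Y_def by blast
  thus ?thesis by (simp add: Z_def Ks_def)
qed

lemma r0_one: "\<pi> (r 0) = \<one>\<^bsub>G\<^esub> \<and> r 0 \<in> carrier F"
proof -
  have "r ` {0..\<nu>} \<subseteq> carrier F" using r_car by auto
  hence "r 0 \<in> closed_normal_gen F TF (r ` {0..\<nu>})" by (intro conj_in_closed_normal_gen) auto
  hence "r 0 \<in> kernel F G \<pi>" using ker by simp
  thus ?thesis by (simp add: kernel_def)
qed

end



context setting begin

lemma one_mod: "k \<ge> 1 \<Longrightarrow> 1 mod int p ^ k = 1"
  using N2[of k] by simp

lemma th_lvl:
  assumes g: "g \<in> carrier G" and E: "E \<ge> 1" and t: "\<theta> g E = 1" and EK: "E \<le> K"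
  shows "int p ^ E dvd \<theta> g K - 1"
proof -
  have "\<theta> g K mod int p ^ E = \<theta> g E" using theta_compat[OF g EK] .
  hence "\<theta> g K mod int p ^ E = 1 mod int p ^ E" using t one_mod[OF E] by simp
  thus ?thesis by (simp add: mod_eq_dvd_iff)
qed

lemma t1_fact:
  assumes g: "g \<in> carrier G" and K: "K \<ge> 2"
  shows "(odd p \<and> int p dvd \<theta> g K - 1) \<or> (p = 2 \<and> 4 dvd \<theta> g K - 1)"
proof (cases "odd p")
  case True
  have "\<theta> g K mod int p ^ 1 = \<theta> g 1" using theta_compat[OF g, of 1 K] K by simp
  hence "\<theta> g K mod int p = 1 mod int p" using theta_props(2)[OF g] p_gt1 by simp
  thus ?thesis using True by (simp add: mod_eq_dvd_iff)
next
  case False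
  hence p2: "p = 2" and t2: "\<theta> g 2 = 1" using tf g by (auto simp: torsion_free_pair_def)
  have "\<theta> g K mod int p ^ 2 = \<theta> g 2" using theta_compat[OF g K] .
  hence "\<theta> g K mod 4 = 1 mod 4" using p2 t2 by simp
  hence "4 dvd \<theta> g K - 1" by (simp only: mod_eq_dvd_iff)
  thus ?thesis using p2 by simp
qed

lemma common:
  assumes E: "E \<ge> 1" and c: "cocycle p G TG \<theta> (Suc E) c"
  shows "coc F p (Suc E) (\<lambda>f. c (\<pi> f)) (\<lambda>f. \<theta> (\<pi> f) (Suc E))"
    and "s \<in> carrier F" "int p ^ Suc E dvd c (\<pi> s)"
    and "int p ^ Suc E dvd c (\<pi> (r 0))"
proof -
  show C: "coc F p (Suc E) (\<lambda>f. c (\<pi> f)) (\<lambda>f. \<theta> (\<pi> f) (Suc E))" using coc_interp c by simp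
  show "s \<in> carrier F" "int p ^ Suc E dvd c (\<pi> s)" using s_zero[of "Suc E" c] c by auto
  have "\<pi> (r 0) = \<pi> \<one>\<^bsub>F\<^esub>" using r0_one gh by (simp add: group_hom.hom_one)
  thus "int p ^ Suc E dvd c (\<pi> (r 0))" using coc.A_one[OF C] by simp
qed

lemma noA:
  assumes E: "E \<ge> 1" and q: "q = p ^ E" and th: "\<forall>i\<in>{2..d}. \<theta> (\<pi> (x i)) E = 1"
  shows False
proof -
  have j: "1 \<in> {1..d}" using d3 by simp
  obtain c where c: "cocycle p G TG \<theta> (Suc E) c"
    and v: "\<forall>i\<in>{1..d}. c (\<pi> (x i)) mod int p = (if i = 1 then 1 else 0)"
    using lift[OF j] by auto
  note cm = common[OF E c]
  interpret C: coc F p "Suc E" "\<lambda>f. c (\<pi> f)" "\<lambda>f. \<theta> (\<pi> f) (Suc E)" by (rule cm(1))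
  have x: "\<forall>i\<in>{1..d}. x i \<in> carrier F" using x_car by blast
  have tx: "\<forall>i\<in>{2..d}. int p ^ E dvd \<theta> (\<pi> (x i)) (Suc E) - 1"
    using th th_lvl[OF _ E] pi_car x_car by auto
  have "c (\<pi> (x 1)) mod int p = 1 mod int p" using v j p_gt1 by simp
  hence a1: "coprime (c (\<pi> (x 1))) (int p)" using C.cop_p by (simp add: mod_eq_dvd_iff)
  have ai: "\<forall>i\<in>{2..d}. int p dvd c (\<pi> (x i))"
  proof
    fix i assume i: "i \<in> {2..d}"
    hence "i \<in> {1..d}" "i \<noteq> 1" by auto
    hence "c (\<pi> (x i)) mod int p = 0" using v by simp
    thus "int p dvd c (\<pi> (x i))" by (simp add: dvd_eq_mod_eq_0)
  qed
  have t1: "(odd p \<and> int p dvd \<theta> (\<pi> (x 1)) (Suc E) - 1) \<or> (p = 2 \<and> 4 dvd \<theta> (\<pi> (x 1)) (Suc E) - 1)"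
    using t1_fact pi_car x_car j E by simp
  show False by (rule C.caseA[OF refl E x d_odd d3 n2 cm(2) cm(3) r0 cm(4) tx q a1 ai t1])
qed

lemma noB:
  assumes E: "E \<ge> 1" and th: "\<forall>i\<in>{2..d}. \<theta> (\<pi> (x i)) E = 1"
    and i0: "i0 \<in> {2..d}" and bad: "\<theta> (\<pi> (x i0)) (Suc E) \<noteq> 1"
    and q: "q = 0 \<or> (\<exists>f\<ge>E. q = p ^ f)"
  shows False
proof -
  define j0 where "j0 = (if even i0 then i0 + 1 else i0 - 1)"
  have j0: "j0 \<in> {2..d}"
  proof (cases "even i0")
    case True
    hence "i0 \<noteq> d" using d_odd by auto
    thus ?thesis using i0 True by (auto simp: j0_def)
  next
    case False
    hence "i0 \<noteq> 2" by auto
    thus ?thesis using i0 False by (auto simp: j0_def)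
  qed
  have partner: "(if even j0 then j0 + 1 else j0 - 1) = i0"
    using i0 by (auto simp: j0_def)
  have j: "j0 \<in> {1..d}" using j0 by simp
  obtain c where c: "cocycle p G TG \<theta> (Suc E) c"
    and v: "\<forall>i\<in>{1..d}. c (\<pi> (x i)) mod int p = (if i = j0 then 1 else 0)"
    using lift[OF j] by auto
  note cm = common[OF E c]
  interpret C: coc F p "Suc E" "\<lambda>f. c (\<pi> f)" "\<lambda>f. \<theta> (\<pi> f) (Suc E)" by (rule cm(1))
  have x: "\<forall>i\<in>{1..d}. x i \<in> carrier F" using x_car by blast
  have tx: "\<forall>i\<in>{2..d}. int p ^ E dvd \<theta> (\<pi> (x i)) (Suc E) - 1"
    using th th_lvl[OF _ E] pi_car x_car by auto
  have "c (\<pi> (x j0)) mod int p = 1 mod int p" using v j p_gt1 by simp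
  hence a0: "coprime (c (\<pi> (x j0))) (int p)" using C.cop_p by (simp add: mod_eq_dvd_iff)
  have ai: "\<forall>i\<in>{1..d}. i \<noteq> j0 \<longrightarrow> int p dvd c (\<pi> (x i))" using v by auto
  have j1: "1 \<in> {1..d}" using d3 by simp
  have t1: "(odd p \<and> int p dvd \<theta> (\<pi> (x 1)) (Suc E) - 1) \<or> (p = 2 \<and> 4 dvd \<theta> (\<pi> (x 1)) (Suc E) - 1)"
    using t1_fact pi_car x_car j1 E by simp
  have bad': "\<not> int p ^ Suc E dvd \<theta> (\<pi> (x (if even j0 then j0 + 1 else j0 - 1))) (Suc E) - 1"
  proof
    assume a: "int p ^ Suc E dvd \<theta> (\<pi> (x (if even j0 then j0 + 1 else j0 - 1))) (Suc E) - 1"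
    have g: "\<pi> (x i0) \<in> carrier G" using pi_car x_car i0 by simp
    have "\<theta> (\<pi> (x i0)) (Suc E) = 1"
      using rng1 theta_props(1)[OF g, of "Suc E"] N2[of "Suc E"] a partner by auto
    thus False using bad by simp
  qed
  show False by (rule C.caseB[OF refl E x d_odd d3 n2 cm(2) cm(3) r0 cm(4) tx t1 j0 a0 ai bad' q])
qed


lemma main: "q = 0 \<and> (\<forall>i\<in>{2..d}. \<theta> (\<pi> (x i)) = padic_one p)"
proof (rule ccontr)
  assume neg: "\<not> (q = 0 \<and> (\<forall>i\<in>{2..d}. \<theta> (\<pi> (x i)) = padic_one p))"
  have gi: "i \<in> {2..d} \<Longrightarrow> \<pi> (x i) \<in> carrier G" for i using pi_car x_car by simp
  define P where "P k \<longleftrightarrow> k \<ge> 1 \<and> (\<exists>i\<in>{2..d}. \<theta> (\<pi> (x i)) k \<noteq> 1)" for k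
  show False
  proof (cases "\<exists>k. P k")
    case True
    define m0 where "m0 = (LEAST k. P k)"
    have Pm: "P m0" unfolding m0_def using True by (metis LeastI)
    have lt: "k < m0 \<Longrightarrow> \<not> P k" for k unfolding m0_def using not_less_Least by blast
    have "m0 \<noteq> 1" using Pm theta_props(2) gi by (auto simp: P_def)
    hence m2: "m0 \<ge> 2" using Pm by (simp add: P_def)
    define E where "E = m0 - 1"
    have E: "E \<ge> 1" "Suc E = m0" using m2 by (auto simp: E_def)
    have thE: "\<forall>i\<in>{2..d}. \<theta> (\<pi> (x i)) k = 1" if "1 \<le> k" "k \<le> E" for k
      using lt[of k] that E by (auto simp: P_def)
    obtain i0 where i0: "i0 \<in> {2..d}" "\<theta> (\<pi> (x i0)) (Suc E) \<noteq> 1" using Pm E by (auto simp: P_def)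
    show False
    proof (cases "\<exists>f. f \<ge> 1 \<and> f \<le> E \<and> q = p ^ f")
      case True
      then obtain f where f: "f \<ge> 1" "f \<le> E" "q = p ^ f" by blast
      show False using noA[OF f(1) f(3)] thE[OF f(1) f(2)] by blast
    next
      case False
      hence "q = 0 \<or> (\<exists>f\<ge>E. q = p ^ f)" using qform by (metis nat_le_linear)
      thus False using noB[OF E(1) thE[OF E(1) order_refl] i0] by blast
    qed
  next
    case False
    have all: "\<forall>i\<in>{2..d}. \<theta> (\<pi> (x i)) = padic_one p"
    proof
      fix i assume i: "i \<in> {2..d}"
      show "\<theta> (\<pi> (x i)) = padic_one p"
      proof
        fix k
        show "\<theta> (\<pi> (x i)) k = padic_one p k"
        proof (cases "k = 0")
          case True
          then show ?thesis using theta_props(1)[OF gi[OF i], of 0] by (simp add: padic_one_def)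
        next
          case False
          hence "\<theta> (\<pi> (x i)) k = 1" using \<open>\<not> (\<exists>k. P k)\<close> i by (auto simp: P_def)
          thus ?thesis using one_mod[of k] False by (simp add: padic_one_def)
        qed
      qed
    qed
    hence "q \<noteq> 0" using neg by auto
    then obtain f where f: "f \<ge> 1" "q = p ^ f" using qform by blast
    have "\<forall>i\<in>{2..d}. \<theta> (\<pi> (x i)) f = 1" using all one_mod[OF f(1)] by (simp add: padic_one_def)
    thus False using noA[OF f] by blast
  qed
qed

end

theorem proposition3p4:
  fixes p d n q \<nu> :: nat
    and F :: "'f monoid" and TF :: "'f topology" and x :: "nat \<Rightarrow> 'f"
    and G :: "'g monoid" and TG :: "'g topology" and \<pi> :: "'f \<Rightarrow> 'g"
    and r :: "nat \<Rightarrow> 'f" and s :: 'f and \<theta> :: "'g \<Rightarrow> nat \<Rightarrow> int"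
  assumes "Factorial_Ring.prime p"
    and "odd d" and "d \<ge> 3"
    and "n \<ge> 2"
    and "q = 0 \<or> (\<exists>f\<ge>1. q = p ^ f)"
    and "p = 2 \<longrightarrow> q \<noteq> 2"
    and "free_pro_p p d F TF x"
    and "pro_p_group p G TG"
    and "\<pi> \<in> hom F G" and "continuous_map TF TG \<pi>" and "\<pi> ` carrier F = carrier G"
    and "\<forall>i\<in>{0..\<nu>}. r i \<in> carrier F"
    and "kernel F G \<pi> = closed_normal_gen F TF (r ` {0..\<nu>})"
    and "r ` {0..\<nu>} \<subseteq> frattini p F TF"
    and "s \<in> ccomm F TF (ccomm F TF (closed_gen F TF (x ` {3..d})))"
    and "\<forall>i\<in>{1..\<nu>}. r i \<in> ccomm F TF (closed_gen F TF (x ` {3..d}))"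
    and "r 0 = x 1 [^]\<^bsub>F\<^esub> q \<otimes>\<^bsub>F\<^esub> lcomm F (x 1) (x 2) n \<otimes>\<^bsub>F\<^esub> comm F (x 2) (x 3)
              \<otimes>\<^bsub>F\<^esub> gprod F (map (\<lambda>j. comm F (x (2 * j)) (x (2 * j + 1))) [2..<(d + 1) div 2])
              \<otimes>\<^bsub>F\<^esub> s"
    and "orientation p G TG \<theta>"
    and "torsion_free_pair p G \<theta>"
    and "kummerian p G TG \<theta>"
  shows "q = 0 \<and> (\<forall>i\<in>{2..d}. \<theta> (\<pi> (x i)) = padic_one p)"
proof -
  interpret setting p d n q \<nu> F TF x G TG \<pi> r s \<theta>
    using assms by (unfold_locales) auto
  show ?thesis by (rule main)
qed


end
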